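(* For every $d,k,N\in\mathbb{N}$, the barycenter map $\mathsf{bary}:\mathcal{G}_{d,k}^N\to\mathcal{G}_{d,k}$ is (i) surjective, (ii) invariant under permutation of the sample $(\mathbf{x}_1,\dots,\mathbf{x}_N)$, and (iii) bijective when $N-1$ of the $N$ sample elements are fixed, i.e. for all $\mathbf{x}_1,\dots,\mathbf{x}_{N-1},\mathbf{y}\in\mathcal{G}_{d,k}$ there is a unique $\mathbf{x}_N\in\mathcal{G}_{d,k}$ with $\mathsf{bary}(\mathbf{x}_1,\dots,\mathbf{x}_N)=\mathbf{y}$.
   Context: $T_{d,k}=\bigoplus_{\ell=0}^k(\mathbb{R}^d)^{\otimes\ell}$ is the truncated tensor algebra with product the bilinear extension of the tensor product of levels, set to $0$ when the total level exceeds $k$. $\mathfrak{g}_{d,k}$ is the smallest Lie subalgebra (commutator bracket) of $T_{d,k}$ containing $e_1,\dots,e_d\in\mathbb{R}^d$; $\exp(\mathbf{z})=\sum_{\ell=0}^k\mathbf{z}^{\otimes\ell}/\ell!$; $\mathcal{G}_{d,k}=\exp(\mathfrak{g}_{d,k})$, a group under the product of $T_{d,k}$, with $\log=\exp^{-1}$, $\log(\mathbf{s})=\sum_{\ell\ge1}\frac{(-1)^{\ell+1}}{\ell}(\mathbf{s}-1)^{\otimes\ell}$. For $\mathbf{x}\in\mathcal{G}_{d,k}^N$, $\mathsf{bary}(\mathbf{x})$ is the unique $\mathbf{m}\in\mathcal{G}_{d,k}$ with $\sum_{i=1}^N\log(\mathbf{m}^{-1}\mathbf{x}_i)=0$. 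*)

theory Defs
  imports Complex_Main "HOL-Combinatorics.Permutations"
begin

text \<open>An element is represented by its coefficient
  function on words (lists of letters); letter i stands for the basis vector e_{i+1}
  of R^d, so letters range over 0..d-1. Elements of T_{d,k} vanish on words of
  length > k and on words containing a letter >= d.\<close>

type_synonym tensor = "nat list \<Rightarrow> real"

definition tcarrier :: "nat \<Rightarrow> nat \<Rightarrow> tensor set" where
  "tcarrier d k = {a. \<forall>w. (k < length w \<or> (\<exists>i\<in>set w. d \<le> i)) \<longrightarrow> a w = 0}"

definition tunit :: tensor where
  "tunit = (\<lambda>w. if w = [] then 1 else 0)"

text \<open>Basis vector e_{i+1} in T_{d,k} (zero if k = 0, since level 1 is truncated).\<close>
definition tgen :: "nat \<Rightarrow> nat \<Rightarrow> tensor" where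
  "tgen k i = (\<lambda>w. if w = [i] \<and> 1 \<le> k then 1 else 0)"

definition tadd :: "tensor \<Rightarrow> tensor \<Rightarrow> tensor" where
  "tadd a b = (\<lambda>w. a w + b w)"

definition tsub :: "tensor \<Rightarrow> tensor \<Rightarrow> tensor" where
  "tsub a b = (\<lambda>w. a w - b w)"

definition tscale :: "real \<Rightarrow> tensor \<Rightarrow> tensor" where
  "tscale c a = (\<lambda>w. c * a w)"

definition tmul :: "nat \<Rightarrow> tensor \<Rightarrow> tensor \<Rightarrow> tensor" where
  "tmul k a b = (\<lambda>w. if length w \<le> k
      then (\<Sum>i\<le>length w. a (take i w) * b (drop i w)) else 0)"

primrec tpow :: "nat \<Rightarrow> tensor \<Rightarrow> nat \<Rightarrow> tensor" where
  "tpow k a 0 = tunit"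
| "tpow k a (Suc n) = tmul k a (tpow k a n)"

definition tbracket :: "nat \<Rightarrow> tensor \<Rightarrow> tensor \<Rightarrow> tensor" where
  "tbracket k a b = tsub (tmul k a b) (tmul k b a)"

inductive_set lie_alg :: "nat \<Rightarrow> nat \<Rightarrow> tensor set" for d k where
  zero: "(\<lambda>w. 0) \<in> lie_alg d k"
| gen: "i < d \<Longrightarrow> tgen k i \<in> lie_alg d k"
| add: "a \<in> lie_alg d k \<Longrightarrow> b \<in> lie_alg d k \<Longrightarrow> tadd a b \<in> lie_alg d k"
| scale: "a \<in> lie_alg d k \<Longrightarrow> tscale c a \<in> lie_alg d k"
| bracket: "a \<in> lie_alg d k \<Longrightarrow> b \<in> lie_alg d k \<Longrightarrow> tbracket k a b \<in> lie_alg d k"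

definition texp :: "nat \<Rightarrow> tensor \<Rightarrow> tensor" where
  "texp k z = (\<lambda>w. \<Sum>l\<le>k. tpow k z l w / fact l)"

definition tlog :: "nat \<Rightarrow> tensor \<Rightarrow> tensor" where
  "tlog k s = (\<lambda>w. \<Sum>l\<in>{1..k}. ((-1) ^ (l + 1) / real l) * tpow k (tsub s tunit) l w)"

text \<open>Inverse in the group (m = 1 - u with u nilpotent: m^{-1} = sum of u^l).\<close>
definition tinv :: "nat \<Rightarrow> tensor \<Rightarrow> tensor" where
  "tinv k m = (\<lambda>w. \<Sum>l\<le>k. tpow k (tsub tunit m) l w)"

definition grp :: "nat \<Rightarrow> nat \<Rightarrow> tensor set" where
  "grp d k = texp k ` lie_alg d k"

text \<open>Barycenter of a sample x_0..x_{N-1} (given as a function on indices < N).\<close>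
definition bary :: "nat \<Rightarrow> nat \<Rightarrow> nat \<Rightarrow> (nat \<Rightarrow> tensor) \<Rightarrow> tensor" where
  "bary d k N x = (THE m. m \<in> grp d k \<and>
      (\<lambda>w. \<Sum>i<N. tlog k (tmul k (tinv k m) (x i)) w) = (\<lambda>w. 0))"

end

theory Submission
  imports Defs "HOL-Library.Poly_Mapping" "HOL-Library.Product_Plus"
   "HOL-Computational_Algebra.Formal_Power_Series"
begin


instantiation list :: (type) monoid_add
begin
definition zero_list_def: "0 = []"
definition plus_list_def: "xs + ys = xs @ ys"
instance by standard (auto simp: zero_list_def plus_list_def)
end

class graded = monoid_add +
  fixes deg :: "'a \<Rightarrow> nat"
  assumes deg_plus: "deg (a + b) = deg a + deg b"
  and deg_eq_0: "deg a = 0 \<longleftrightarrow> a = 0"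

instantiation list :: (type) graded
begin
definition deg_list_def: "deg (xs :: 'a list) = length xs"
instance by standard (auto simp: deg_list_def plus_list_def zero_list_def)
end

instantiation prod :: (graded, graded) graded
begin
definition deg_prod_def: "deg (p :: 'a \<times> 'b) = deg (fst p) + deg (snd p)"
instance by standard (auto simp: deg_prod_def deg_plus deg_eq_0 zero_prod_def)
end

type_synonym 'a ps = "'a \<Rightarrow>\<^sub>0 real"

abbreviation lk :: "('a \<Rightarrow>\<^sub>0 'b::zero) \<Rightarrow> 'a \<Rightarrow> 'b" where "lk \<equiv> Poly_Mapping.lookup"

definition C :: "real \<Rightarrow> ('a::graded) ps" where "C c = Poly_Mapping.single 0 c"

lemma lookup_C_mult: "lk (C c * (x::'a::graded ps)) w = c * lk x w"
  unfolding C_def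
  by (simp flip: mult_map_scale_conv_mult, transfer, simp add: when_def)

lemma lookup_mult_C: "lk ((x::'a::graded ps) * C c) w = lk x w * c"
proof -
  have *: "Sum_any (\<lambda>q. (lk (Poly_Mapping.single (0::'a) c) q when w = l + q)) = (c when w = l)" for l :: 'a
  proof -
    have "Sum_any (\<lambda>q. (lk (Poly_Mapping.single 0 c) q when w = l + q)) = Sum_any (\<lambda>q. ((c when w = l + q) when q = 0))"
      by (rule Sum_any.cong) (auto simp: lookup_single when_def)
    also have "\<dots> = (c when w = l)" by simp
    finally show ?thesis .
  qed
  show ?thesis unfolding C_def lookup_mult * by (simp add: mult_when)
qed

lemma C_comm: "C c * (x::'a::graded ps) = x * C c"
  by (rule poly_mapping_eqI) (simp add: lookup_C_mult lookup_mult_C)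

lemma C_mult: "C a * C b = (C (a * b) :: 'a::graded ps)"
  by (simp add: C_def mult_single)

lemma C_add: "C (a + b) = (C a + C b :: 'a::graded ps)"
  by (simp add: C_def single_add)

lemma C_diff: "C (a - b) = (C a - C b :: 'a::graded ps)"
  by (simp add: C_def single_diff)

lemma C_uminus: "C (- a) = (- C a :: 'a::graded ps)"
  by (simp add: C_def single_uminus)

lemma C_0[simp]: "C 0 = (0 :: 'a::graded ps)"
  by (simp add: C_def)

lemma C_1[simp]: "C 1 = (1 :: 'a::graded ps)"
  by (simp add: C_def)

lemma C_sum: "C (sum f A) = (\<Sum>i\<in>A. C (f i) :: 'a::graded ps)"
  by (induction A rule: infinite_finite_induct) (auto simp: C_add)

lemma C_mult_assoc_left: "C a * (C b * x) = C (a * b) * (x :: 'a::graded ps)"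
  by (simp add: C_mult flip: mult.assoc)

lemma C_comm2: "x * (C c * y) = C c * (x * (y::'a::graded ps))"
  by (metis C_comm mult.assoc)

lemma lookup_C: "lk (C c :: 'a::graded ps) w = (if w = 0 then c else 0)"
  by (simp add: C_def lookup_single when_def)

subsection \<open>Low-degree vanishing\<close>

definition low :: "nat \<Rightarrow> ('a::graded) ps \<Rightarrow> bool" where
  "low n f \<longleftrightarrow> (\<forall>x. deg x < n \<longrightarrow> lk f x = 0)"

lemma low_0[simp]: "low 0 f"
  by (simp add: low_def)

lemma low_zero[simp]: "low n 0"
  by (simp add: low_def)

lemma low_mono: "low n f \<Longrightarrow> m \<le> n \<Longrightarrow> low m f"
  by (auto simp: low_def)

lemma low_add: "low n f \<Longrightarrow> low n g \<Longrightarrow> low n (f + g)"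
  by (simp add: low_def lookup_add)

lemma low_diff: "low n f \<Longrightarrow> low n g \<Longrightarrow> low n (f - g)"
  by (simp add: low_def lookup_minus)

lemma low_uminus: "low n f \<Longrightarrow> low n (- f)"
  by (simp add: low_def lookup_uminus)

lemma low_C_mult: "low n f \<Longrightarrow> low n (C c * f)"
  by (simp add: low_def lookup_C_mult)

lemma low_sum: "(\<And>i. i \<in> A \<Longrightarrow> low n (f i)) \<Longrightarrow> low n (sum f A)"
  by (induction A rule: infinite_finite_induct) (auto intro: low_add)

lemma low_mult: fixes f g :: "'a::graded ps" shows "low m f \<Longrightarrow> low n g \<Longrightarrow> low (m + n) (f * g)"
proof -
  assume f: "low m f" and g: "low n g"
  show "low (m + n) (f * g)"
    unfolding low_def
  proof (intro allI impI)
    fix x :: 'a assume x: "deg x < m + n"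
    show "lk (f * g) x = 0"
    proof (rule ccontr)
      assume "lk (f * g) x \<noteq> 0"
      then have "x \<in> Poly_Mapping.keys (f * g)" by (simp add: in_keys_iff)
      with keys_mult obtain a b where "x = a + b" "a \<in> Poly_Mapping.keys f" "b \<in> Poly_Mapping.keys g"
        by blast
      moreover from f \<open>a \<in> Poly_Mapping.keys f\<close> have "m \<le> deg a"
        unfolding low_def in_keys_iff using not_less by blast
      moreover from g \<open>b \<in> Poly_Mapping.keys g\<close> have "n \<le> deg b"
        unfolding low_def in_keys_iff using not_less by blast
      ultimately show False using x by (simp add: deg_plus)
    qed
  qed
qed

lemma low_mult_left: "low n f \<Longrightarrow> low n (f * g)"
  using low_mult[of n f 0 g] by simp

lemma low_mult_right: "low n g \<Longrightarrow> low n (f * g)"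
  using low_mult[of 0 f n g] by simp

lemma low_power: "low m z \<Longrightarrow> low (m * n) (z ^ n)"
proof (induction n)
  case (Suc n)
  then have "low (m + m * n) (z * z ^ n)" by (intro low_mult) auto
  then show ?case by simp
qed simp

lemma low_1_power: "low 1 z \<Longrightarrow> low n (z ^ n)"
  using low_power[of 1 z n] by simp

definition eqv :: "nat \<Rightarrow> ('a::graded) ps \<Rightarrow> 'a ps \<Rightarrow> bool" where
  "eqv n a b \<longleftrightarrow> low n (a - b)"

lemma eqv_refl[simp]: "eqv n a a"
  by (simp add: eqv_def)

lemma eqv_sym: "eqv n a b \<Longrightarrow> eqv n b a"
  unfolding eqv_def by (drule low_uminus) simp

lemma eqv_trans: "eqv n a b \<Longrightarrow> eqv n b c \<Longrightarrow> eqv n a c"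
  unfolding eqv_def by (drule (1) low_add) simp

lemma eqv_add: "eqv n a b \<Longrightarrow> eqv n c d \<Longrightarrow> eqv n (a + c) (b + d)"
  unfolding eqv_def by (drule (1) low_add) (simp add: algebra_simps)

lemma eqv_diff: "eqv n a b \<Longrightarrow> eqv n c d \<Longrightarrow> eqv n (a - c) (b - d)"
  unfolding eqv_def by (drule (1) low_diff) (simp add: algebra_simps)

lemma eqv_uminus: "eqv n a b \<Longrightarrow> eqv n (- a) (- b)"
  unfolding eqv_def by (drule low_uminus) (simp add: algebra_simps)

lemma eqv_mult: fixes a b c d :: "'a::graded ps" shows "eqv n a b \<Longrightarrow> eqv n c d \<Longrightarrow> eqv n (a * c) (b * d)"
proof -
  assume ab: "eqv n a b" and cd: "eqv n c d"
  have "a * c - b * d = (a - b) * c + b * (c - d)" by (simp add: algebra_simps)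
  moreover have "low n ((a - b) * c)" using ab by (simp add: eqv_def low_mult_left)
  moreover have "low n (b * (c - d))" using cd by (simp add: eqv_def low_mult_right)
  ultimately show ?thesis by (simp add: eqv_def low_add)
qed

lemma eqv_C_mult: "eqv n a b \<Longrightarrow> eqv n (C c * a) (C c * b)"
  by (rule eqv_mult) auto

lemma eqv_power: "eqv n a b \<Longrightarrow> eqv n (a ^ m) (b ^ m)"
  by (induction m) (auto intro: eqv_mult)

lemma eqv_sum: "(\<And>i. i \<in> A \<Longrightarrow> eqv n (f i) (g i)) \<Longrightarrow> eqv n (sum f A) (sum g A)"
  by (induction A rule: infinite_finite_induct) (auto intro: eqv_add)

lemma eqv_mono: fixes a b :: "'a::graded ps" shows "eqv n a b \<Longrightarrow> m \<le> n \<Longrightarrow> eqv m a b"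
  unfolding eqv_def using low_mono by blast

lemma eqv_low: fixes a b :: "'a::graded ps" shows "eqv n a b \<Longrightarrow> low n (a - b)"
  by (simp add: eqv_def)

lemma low_eqv0: fixes a :: "'a::graded ps" shows "low n a \<Longrightarrow> eqv n a 0"
  by (simp add: eqv_def)

lemma eqv_low_iff: fixes a b :: "'a::graded ps" assumes "eqv n a b" shows "low n a \<longleftrightarrow> low n b"
proof
  assume "low n a" then have "low n (a - (a - b))" using assms by (rule_tac low_diff) (auto simp: eqv_def)
  then show "low n b" by simp
next
  assume "low n b" then have "low n ((a - b) + b)" using assms by (rule_tac low_add) (auto simp: eqv_def)
  then show "low n a" by simp
qed

lemma cut_lemma:
  fixes A B :: "nat \<Rightarrow> ('a::graded) ps"
  assumes "\<And>i. low i (A i)" "\<And>j. low j (B j)"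
  shows "eqv (Suc K) ((\<Sum>i\<le>K. A i) * (\<Sum>j\<le>K. B j)) (\<Sum>n\<le>K. \<Sum>i\<le>n. A i * B (n - i))"
proof -
  let ?S = "{..K} \<times> {..K}" and ?T = "{(i,j). i + j \<le> K}"
  have sub: "?T \<subseteq> ?S" by auto
  have "(\<Sum>i\<le>K. A i) * (\<Sum>j\<le>K. B j) = (\<Sum>(i,j)\<in>?S. A i * B j)"
    by (simp add: sum_product sum.cartesian_product)
  also have "\<dots> = (\<Sum>(i,j)\<in>?S - ?T. A i * B j) + (\<Sum>(i,j)\<in>?T. A i * B j)"
    by (rule sum.subset_diff[OF sub]) auto
  also have "(\<Sum>(i,j)\<in>?T. A i * B j) = (\<Sum>n\<le>K. \<Sum>i\<le>n. A i * B (n - i))"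
    by (rule sum.triangle_reindex_eq)
  finally have eq: "(\<Sum>i\<le>K. A i) * (\<Sum>j\<le>K. B j) - (\<Sum>n\<le>K. \<Sum>i\<le>n. A i * B (n - i))
      = (\<Sum>(i,j)\<in>?S - ?T. A i * B j)" by simp
  have "low (Suc K) (\<Sum>(i,j)\<in>?S - ?T. A i * B j)"
  proof (rule low_sum)
    fix p assume "p \<in> ?S - ?T"
    then obtain i j where p: "p = (i, j)" "Suc K \<le> i + j" by auto
    have "low (i + j) (A i * B j)" by (rule low_mult) (use assms in auto)
    then show "low (Suc K) (case p of (i, j) \<Rightarrow> A i * B j)" using p low_mono by auto
  qed
  then show ?thesis unfolding eqv_def eq .
qed


lemma power_commute_gen:
  fixes a b :: "'a::ring_1"
  assumes "a * b = b * a"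
  shows "b * a ^ k = a ^ k * b"
proof (induction k)
  case (Suc k)
  have "b * a ^ Suc k = (b * a) * a ^ k" by (simp add: mult.assoc)
  also have "\<dots> = a * (b * a ^ k)" using assms by (simp flip: mult.assoc)
  also have "\<dots> = a ^ Suc k * b" using Suc by (simp add: mult.assoc)
  finally show ?case .
qed simp

lemma binomial_commute:
  fixes a b :: "'a::ring_1"
  assumes ab: "a * b = b * a"
  shows "(a + b) ^ n = (\<Sum>k\<le>n. of_nat (n choose k) * a ^ k * b ^ (n - k))"
proof (induction n)
  case 0
  then show ?case by simp
next
  case (Suc n)
  have decomp: "{0..n+1} = {0} \<union> {n + 1} \<union> {1..n}" and decomp2: "{0..n} = {0} \<union> {1..n}"
    by auto
  have A: "a * (of_nat c * a ^ k * b ^ j) = of_nat c * a ^ (k + 1) * b ^ j" for c k j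
    by (simp add: mult.assoc mult_of_nat_commute)
  have B: "b * (of_nat c * a ^ k * b ^ j) = of_nat c * a ^ k * b ^ (j + 1)" for c k j
  proof -
    have "b * (of_nat c * a ^ k * b ^ j) = of_nat c * ((b * a ^ k) * b ^ j)"
      by (metis mult.assoc mult_of_nat_commute)
    also have "\<dots> = of_nat c * (a ^ k * (b * b ^ j))"
      using power_commute_gen[OF ab] by (simp add: mult.assoc)
    finally show ?thesis by (simp add: mult.assoc)
  qed
  have "(a + b)^(n+1) = (a + b) * (\<Sum>k\<le>n. of_nat (n choose k) * a^k * b^(n - k))"
    using Suc.IH by simp
  also have "\<dots> = a * (\<Sum>k\<le>n. of_nat (n choose k) * a^k * b^(n-k)) +
      b * (\<Sum>k\<le>n. of_nat (n choose k) * a^k * b^(n-k))"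
    by (rule distrib_right)
  also have "\<dots> = (\<Sum>k\<le>n. of_nat (n choose k) * a^(k+1) * b^(n-k)) +
      (\<Sum>k\<le>n. of_nat (n choose k) * a^k * b^(n - k + 1))"
    by (simp add: sum_distrib_left A B)
  also have "\<dots> = (\<Sum>k\<le>n. of_nat (n choose k) * a^k * b^(n + 1 - k)) +
      (\<Sum>k=1..n+1. of_nat (n choose (k - 1)) * a^k * b^(n + 1 - k))"
    by (simp add: atMost_atLeast0 sum.shift_bounds_cl_Suc_ivl Suc_diff_le del: sum.cl_ivl_Suc)
  also have "\<dots> = b^(n + 1) +
      (\<Sum>k=1..n. of_nat (n choose k) * a^k * b^(n + 1 - k)) + (a^(n + 1) +
      (\<Sum>k=1..n. of_nat (n choose (k - 1)) * a^k * b^(n + 1 - k)))"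
      using sum.nat_ivl_Suc' [of 1 n "\<lambda>k. of_nat (n choose (k-1)) * a ^ k * b ^ (n + 1 - k)"]
    by (simp add: sum.atLeast_Suc_atMost atMost_atLeast0)
  also have "\<dots> = a^(n + 1) + b^(n + 1) +
      (\<Sum>k=1..n. of_nat (n + 1 choose k) * a^k * b^(n + 1 - k))"
    by (auto simp add: algebra_simps sum.distrib [symmetric] choose_reduce_nat intro!: sum.cong)
  also have "\<dots> = (\<Sum>k\<le>n+1. of_nat (n + 1 choose k) * a^k * b^(n + 1 - k))"
    using decomp by (simp add: atMost_atLeast0 algebra_simps)
  finally show ?case
    by simp
qed


declare eqv_trans[trans]

definition ev :: "nat \<Rightarrow> real fps \<Rightarrow> ('a::graded) ps \<Rightarrow> 'a ps" where
  "ev K f z = (\<Sum>i\<le>K. C (fps_nth f i) * z ^ i)"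

lemma ev_add: "ev K (f + g) z = ev K f z + ev K g z"
  by (simp add: ev_def C_add distrib_right sum.distrib)

lemma ev_diff: "ev K (f - g) z = ev K f z - ev K g z"
  by (simp add: ev_def C_diff left_diff_distrib sum_subtractf)

lemma ev_uminus: "ev K (- f) z = - ev K f z"
  by (simp add: ev_def C_uminus sum_negf)

lemma ev_const_mult: "ev K (fps_const c * f) z = C c * ev K f z"
  by (simp add: ev_def sum_distrib_left C_mult flip: mult.assoc)

lemma ev_1: "ev K 1 (z::'a::graded ps) = 1"
proof -
  have "ev K 1 z = (\<Sum>i\<in>{0}. C (fps_nth 1 i) * z ^ i)"
    unfolding ev_def by (rule sum.mono_neutral_right) auto
  then show ?thesis by simp
qed

lemma ev_X: "1 \<le> K \<Longrightarrow> ev K fps_X (z::'a::graded ps) = z"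
proof -
  assume K: "1 \<le> K"
  have "ev K fps_X z = (\<Sum>i\<in>{1}. C (fps_nth fps_X i) * z ^ i)"
    unfolding ev_def by (rule sum.mono_neutral_right) (use K in auto)
  then show ?thesis by simp
qed

lemma ev_X_eqv: "low 1 z \<Longrightarrow> eqv (Suc K) (ev K fps_X (z::'a::graded ps)) z"
proof (cases K)
  case 0
  assume "low 1 z"
  then show ?thesis using 0 by (simp add: ev_def eqv_def low_uminus)
next
  case (Suc K')
  then show ?thesis by (simp add: ev_X)
qed

lemma low_ev: "low 1 (z::'a::graded ps) \<Longrightarrow> fps_nth f 0 = 0 \<Longrightarrow> low 1 (ev K f z)"
  unfolding ev_def
proof (rule low_sum)
  fix i assume "low 1 z" "fps_nth f 0 = 0"
  then show "low 1 (C (fps_nth f i) * z ^ i)"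
  proof (cases i)
    case (Suc n)
    have "low (Suc n) (z ^ Suc n)" by (rule low_1_power) fact
    then have "low 1 (z ^ i)" using Suc low_mono by fastforce
    then show ?thesis by (rule low_C_mult)
  qed simp
qed

lemma ev_cong: "eqv n a b \<Longrightarrow> eqv n (ev K f a) (ev K f (b::'a::graded ps))"
  unfolding ev_def by (intro eqv_sum eqv_C_mult eqv_power)

lemma C_pow_mult: "C a * (z::'a::graded ps) ^ i * (C b * z ^ j) = C (a * b) * z ^ (i + j)"
proof -
  have "C a * z ^ i * (C b * z ^ j) = C a * (z ^ i * (C b * z ^ j))" by (simp add: mult.assoc)
  also have "z ^ i * (C b * z ^ j) = C b * (z ^ i * z ^ j)" by (rule C_comm2)
  finally show ?thesis by (simp add: C_mult_assoc_left power_add)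
qed

lemma ev_mult:
  fixes z :: "'a::graded ps"
  assumes z: "low 1 z"
  shows "eqv (Suc K) (ev K f z * ev K g z) (ev K (f * g) z)"
proof -
  have "eqv (Suc K) (ev K f z * ev K g z)
      (\<Sum>n\<le>K. \<Sum>i\<le>n. C (fps_nth f i) * z ^ i * (C (fps_nth g (n - i)) * z ^ (n - i)))"
    unfolding ev_def
    by (rule cut_lemma) (use z in \<open>auto intro!: low_C_mult low_1_power\<close>)
  also have "(\<Sum>n\<le>K. \<Sum>i\<le>n. C (fps_nth f i) * z ^ i * (C (fps_nth g (n - i)) * z ^ (n - i)))
      = ev K (f * g) z"
    unfolding ev_def fps_mult_nth C_pow_mult
    by (auto simp: C_sum sum_distrib_right atLeast0AtMost intro!: sum.cong)
  finally show ?thesis .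
qed

lemma ev_power:
  fixes z :: "'a::graded ps"
  assumes z: "low 1 z"
  shows "eqv (Suc K) ((ev K f z) ^ l) (ev K (f ^ l) z)"
proof (induction l)
  case 0
  then show ?case by (simp add: ev_1)
next
  case (Suc l)
  have "eqv (Suc K) (ev K f z * ev K f z ^ l) (ev K f z * ev K (f ^ l) z)"
    by (rule eqv_mult) (use Suc in auto)
  also have "eqv (Suc K) \<dots> (ev K (f * f ^ l) z)" by (rule ev_mult[OF z])
  finally show ?case by simp
qed

lemma ev_compose:
  fixes z :: "'a::graded ps"
  assumes z: "low 1 z" and g0: "fps_nth g 0 = 0"
  shows "eqv (Suc K) (ev K f (ev K g z)) (ev K (f oo g) z)"
proof -
  have "eqv (Suc K) (ev K f (ev K g z)) (\<Sum>l\<le>K. C (fps_nth f l) * ev K (g ^ l) z)"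
    unfolding ev_def[of K f]
    by (intro eqv_sum eqv_C_mult ev_power z)
  also have "(\<Sum>l\<le>K. C (fps_nth f l) * ev K (g ^ l) z)
      = (\<Sum>l\<le>K. \<Sum>n\<le>K. C (fps_nth f l * fps_nth (g ^ l) n) * z ^ n)"
    by (simp add: ev_def sum_distrib_left C_mult flip: mult.assoc)
  also have "\<dots> = (\<Sum>n\<le>K. \<Sum>l\<le>K. C (fps_nth f l * fps_nth (g ^ l) n) * z ^ n)"
    by (rule sum.swap)
  also have "\<dots> = (\<Sum>n\<le>K. C (fps_nth (f oo g) n) * z ^ n)"
  proof (rule sum.cong)
    fix n assume n: "n \<in> {..K}"
    have "(\<Sum>l\<le>K. fps_nth f l * fps_nth (g ^ l) n) = (\<Sum>l\<in>{0..n}. fps_nth f l * fps_nth (g ^ l) n)"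
    proof (rule sum.mono_neutral_right)
      show "\<forall>i\<in>{..K} - {0..n}. fps_nth f i * fps_nth (g ^ i) n = 0"
        using startsby_zero_power_prefix[OF g0] by auto
    qed (use n in auto)
    moreover have "(\<Sum>l\<le>K. C (fps_nth f l * fps_nth (g ^ l) n) * z ^ n)
        = C (\<Sum>l\<le>K. fps_nth f l * fps_nth (g ^ l) n) * z ^ n"
      by (simp add: C_sum sum_distrib_right)
    ultimately show "(\<Sum>l\<le>K. C (fps_nth f l * fps_nth (g ^ l) n) * z ^ n) = C (fps_nth (f oo g) n) * z ^ n"
      by (simp add: fps_compose_nth)
  qed simp
  also have "\<dots> = ev K (f oo g) z" by (simp add: ev_def)
  finally show ?thesis .
qed

abbreviation "fLN \<equiv> (fps_ln 1 :: real fps)"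
abbreviation "fEX \<equiv> (fps_exp 1 - 1 :: real fps)"
abbreviation "fEXP \<equiv> (fps_exp 1 :: real fps)"

lemma fLN_fEX: "fLN oo fEX = fps_X"
  using fps_inv_fps_exp_compose(1)[of "1::real"] fps_ln_fps_exp_inv[of "1::real"] by simp

lemma fEX_fLN: "fEX oo fLN = fps_X"
  using fps_inv_fps_exp_compose(2)[of "1::real"] fps_ln_fps_exp_inv[of "1::real"] by simp

lemma ev_EXP: "ev K fEXP z = 1 + ev K fEX z"
  by (simp add: ev_diff ev_1)

lemma log_exp:
  fixes z :: "'a::graded ps"
  assumes z: "low 1 z"
  shows "eqv (Suc K) (ev K fLN (ev K fEX z)) z"
proof -
  have "eqv (Suc K) (ev K fLN (ev K fEX z)) (ev K (fLN oo fEX) z)"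
    by (rule ev_compose[OF z]) simp
  also have "eqv (Suc K) (ev K (fLN oo fEX) z) z"
    unfolding fLN_fEX by (rule ev_X_eqv[OF z])
  finally show ?thesis .
qed

lemma exp_log:
  fixes z :: "'a::graded ps"
  assumes z: "low 1 z"
  shows "eqv (Suc K) (ev K fEX (ev K fLN z)) z"
proof -
  have "eqv (Suc K) (ev K fEX (ev K fLN z)) (ev K (fEX oo fLN) z)"
    by (rule ev_compose[OF z]) simp
  also have "eqv (Suc K) (ev K (fEX oo fLN) z) z"
    unfolding fEX_fLN by (rule ev_X_eqv[OF z])
  finally show ?thesis .
qed

lemma C_of_nat: "(C (real m) :: 'a::graded ps) = of_nat m"
  by (induction m) (simp_all add: C_add)

lemma exp_add:
  fixes a b :: "'a::graded ps"
  assumes a: "low 1 a" and b: "low 1 b" and ab: "a * b = b * a"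
  shows "eqv (Suc K) (ev K fEXP a * ev K fEXP b) (ev K fEXP (a + b))"
proof -
  have "eqv (Suc K) (ev K fEXP a * ev K fEXP b)
     (\<Sum>n\<le>K. \<Sum>i\<le>n. C (fps_nth fEXP i) * a ^ i * (C (fps_nth fEXP (n - i)) * b ^ (n - i)))"
    unfolding ev_def
    by (rule cut_lemma) (use a b in \<open>auto intro!: low_C_mult low_1_power\<close>)
  also have "(\<Sum>n\<le>K. \<Sum>i\<le>n. C (fps_nth fEXP i) * a ^ i * (C (fps_nth fEXP (n - i)) * b ^ (n - i)))
      = ev K fEXP (a + b)"
  proof -
    have *: "C (fps_nth fEXP i) * a ^ i * (C (fps_nth fEXP (n - i)) * b ^ (n - i))
        = C (1 / fact n) * (of_nat (n choose i) * a ^ i * b ^ (n - i))" if "i \<le> n" for i n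
    proof -
      have "C (fps_nth fEXP i) * a ^ i * (C (fps_nth fEXP (n - i)) * b ^ (n - i))
          = C (fps_nth fEXP i) * (a ^ i * (C (fps_nth fEXP (n - i)) * b ^ (n - i)))"
        by (simp add: mult.assoc)
      also have "a ^ i * (C (fps_nth fEXP (n - i)) * b ^ (n - i)) = C (fps_nth fEXP (n - i)) * (a ^ i * b ^ (n - i))"
        by (rule C_comm2)
      also have "C (fps_nth fEXP i) * (C (fps_nth fEXP (n - i)) * (a ^ i * b ^ (n - i)))
          = C (fps_nth fEXP i * fps_nth fEXP (n - i)) * (a ^ i * b ^ (n - i))"
        by (rule C_mult_assoc_left)
      also have "fps_nth fEXP i * fps_nth fEXP (n - i) = (1 / fact n) * real (n choose i)"
      proof -
        have e: "fps_nth fEXP j = 1 / fact j" for j by simp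
        have bf: "real (n choose i) = fact n / (fact i * fact (n - i))"
          using binomial_fact[OF that] by simp
        have nz: "(fact n :: real) \<noteq> 0" "(fact i :: real) \<noteq> 0" "(fact (n - i) :: real) \<noteq> 0" by auto
        show ?thesis unfolding e bf using nz by simp
      qed
      also have "C ((1 / fact n) * real (n choose i)) * (a ^ i * b ^ (n - i))
          = C (1 / fact n) * (C (real (n choose i)) * a ^ i * b ^ (n - i))"
        by (simp only: mult.assoc C_mult_assoc_left)
      also have "(C (real (n choose i)) :: 'a ps) = of_nat (n choose i)"
        by (rule C_of_nat)
      finally show ?thesis .
    qed
    have "(\<Sum>n\<le>K. \<Sum>i\<le>n. C (fps_nth fEXP i) * a ^ i * (C (fps_nth fEXP (n - i)) * b ^ (n - i)))
        = (\<Sum>n\<le>K. \<Sum>i\<le>n. C (1 / fact n) * (of_nat (n choose i) * a ^ i * b ^ (n - i)))"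
      by (intro sum.cong refl, rule *, simp)
    also have "\<dots> = (\<Sum>n\<le>K. C (1 / fact n) * (\<Sum>i\<le>n. of_nat (n choose i) * a ^ i * b ^ (n - i)))"
      by (simp only: sum_distrib_left)
    also have "\<dots> = ev K fEXP (a + b)"
      by (simp add: ev_def binomial_commute[OF ab])
    finally show ?thesis .
  qed
  finally show ?thesis .
qed


definition lin :: "('a::graded \<Rightarrow> 'b::graded ps) \<Rightarrow> 'a ps \<Rightarrow> 'b ps" where
  "lin B x = (\<Sum>w\<in>Poly_Mapping.keys x. C (lk x w) * B w)"

lemma lin_superset:
  fixes x :: "'a::graded ps" and B :: "'a \<Rightarrow> 'b::graded ps"
  assumes "finite S" "Poly_Mapping.keys x \<subseteq> S"
  shows "lin B x = (\<Sum>w\<in>S. C (lk x w) * B w)"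
  unfolding lin_def
  by (rule sum.mono_neutral_left) (use assms in \<open>auto simp: in_keys_iff\<close>)

lemma lin_0[simp]: "lin B 0 = 0"
  by (simp add: lin_def)

lemma lin_single: "lin B (Poly_Mapping.single w c) = C c * B w"
  by (simp add: lin_def lookup_single)

lemma lin_add: "lin B (x + y) = lin B x + lin B y"
proof -
  let ?S = "Poly_Mapping.keys x \<union> Poly_Mapping.keys y"
  have "lin B (x + y) = (\<Sum>w\<in>?S. C (lk (x + y) w) * B w)"
    by (rule lin_superset) (auto dest: subsetD[OF keys_add])
  also have "\<dots> = (\<Sum>w\<in>?S. C (lk x w) * B w) + (\<Sum>w\<in>?S. C (lk y w) * B w)"
    by (simp add: lookup_add C_add distrib_right sum.distrib)
  also have "\<dots> = lin B x + lin B y"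
    by (simp add: lin_superset[symmetric])
  finally show ?thesis .
qed

lemma lin_C_mult: "lin B (C c * x) = C c * lin B x"
proof -
  have "lin B (C c * x) = (\<Sum>w\<in>Poly_Mapping.keys x. C (lk (C c * x) w) * B w)"
    by (rule lin_superset) (auto simp: in_keys_iff lookup_C_mult)
  also have "\<dots> = C c * lin B x"
    by (simp add: lin_def lookup_C_mult sum_distrib_left C_mult_assoc_left)
  finally show ?thesis .
qed

lemma lin_uminus: "lin B (- x) = - lin B x"
  using lin_C_mult[of B "-1" x] by (simp add: C_uminus)

lemma lin_diff: "lin B (x - y) = lin B x - lin B y"
  using lin_add[of B x "- y"] by (simp add: lin_uminus)

lemma lin_sum: "lin B (sum f A) = (\<Sum>i\<in>A. lin B (f i))"
  by (induction A rule: infinite_finite_induct) (auto simp: lin_add)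

lemma decomp: "(x :: 'a::graded ps) = (\<Sum>w\<in>Poly_Mapping.keys x. C (lk x w) * Poly_Mapping.single w 1)"
proof (rule poly_mapping_eqI)
  fix v
  have "lk (\<Sum>w\<in>Poly_Mapping.keys x. C (lk x w) * Poly_Mapping.single w 1) v
      = (\<Sum>w\<in>Poly_Mapping.keys x. lk x w * (if w = v then 1 else 0))"
    by (simp add: lookup_sum lookup_C_mult lookup_single when_def)
  also have "\<dots> = lk x v"
    by (auto simp: in_keys_iff if_distrib cong: if_cong)
  finally show "lk x v = lk (\<Sum>w\<in>Poly_Mapping.keys x. C (lk x w) * Poly_Mapping.single w 1) v" ..
qed

lemma lin_id: "lin (\<lambda>w. Poly_Mapping.single w 1) x = x"
  unfolding lin_def by (rule decomp[symmetric])

lemma lin_comp: "lin B (lin A x) = lin (\<lambda>w. lin B (A w)) x"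
  by (simp add: lin_def[of A] lin_sum lin_C_mult) (simp add: lin_def)

lemma lin_comp2: "lin C' (lin B (lin A x)) = lin (\<lambda>w. lin C' (lin B (A w))) x"
  by (simp add: lin_comp)

lemma lin_cong: "(\<And>w. w \<in> Poly_Mapping.keys x \<Longrightarrow> A w = B w) \<Longrightarrow> lin A x = lin B x"
  by (simp add: lin_def)

lemma lin_mult_out_left: "lin (\<lambda>w. M * B w) x = M * lin B x"
  by (simp add: lin_def sum_distrib_left C_comm2)

lemma lin_mult_out_right: "lin (\<lambda>w. B w * M) x = lin B x * M"
  by (simp add: lin_def sum_distrib_right mult.assoc)

lemma lin_mult_right_in: "lin B (x * y) = lin (\<lambda>w. lin B (Poly_Mapping.single w 1 * y)) x"
proof -
  have "x * y = (\<Sum>w\<in>Poly_Mapping.keys x. C (lk x w) * (Poly_Mapping.single w 1 * y))"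
    by (subst decomp[of x]) (simp add: sum_distrib_right mult.assoc)
  then show ?thesis
    by (simp add: lin_sum lin_C_mult lin_def[of _ x])
qed

lemma lin_mult:
  fixes B :: "'a::graded \<Rightarrow> 'b::graded ps"
  assumes hom: "\<And>u v. B (u + v) = B u * B v"
  shows "lin B (x * y) = lin B x * lin B y"
proof -
  have "lin B (x * y) = lin (\<lambda>u. lin B (Poly_Mapping.single u 1 * y)) x"
    by (rule lin_mult_right_in)
  also have "\<dots> = lin (\<lambda>u. B u * lin B y) x"
  proof (rule lin_cong)
    fix u
    have "Poly_Mapping.single u 1 * y = (\<Sum>v\<in>Poly_Mapping.keys y. C (lk y v) * Poly_Mapping.single (u + v) 1)"
      by (subst decomp[of y]) (simp add: sum_distrib_left C_comm2 mult_single)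
    then show "lin B (Poly_Mapping.single u 1 * y) = B u * lin B y"
      by (simp add: lin_sum lin_C_mult lin_single hom lin_def[of _ y] sum_distrib_left C_comm2)
  qed
  also have "\<dots> = lin B x * lin B y" by (rule lin_mult_out_right)
  finally show ?thesis .
qed

lemma lin_1:
  fixes B :: "'a::graded \<Rightarrow> 'b::graded ps"
  assumes "B 0 = 1"
  shows "lin B 1 = 1"
proof -
  have "lin B (Poly_Mapping.single 0 1) = C 1 * B 0" by (rule lin_single)
  then show ?thesis using assms by simp
qed

lemma lin_power:
  fixes B :: "'a::graded \<Rightarrow> 'b::graded ps"
  assumes "\<And>u v. B (u + v) = B u * B v" "B 0 = 1"
  shows "lin B (x ^ n) = lin B x ^ n"
  by (induction n) (simp_all add: lin_1 lin_mult assms)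

lemma lin_ev:
  fixes B :: "'a::graded \<Rightarrow> 'b::graded ps"
  assumes "\<And>u v. B (u + v) = B u * B v" "B 0 = 1"
  shows "lin B (ev K f x) = ev K f (lin B x)"
  by (simp add: ev_def lin_sum lin_C_mult lin_power assms)

definition graded_map :: "('a::graded \<Rightarrow> 'b::graded ps) \<Rightarrow> bool" where
  "graded_map B \<longleftrightarrow> (\<forall>w. low (deg w) (B w))"

lemma lin_low:
  assumes "graded_map B" "low n x"
  shows "low n (lin B x)"
  unfolding lin_def
proof (rule low_sum)
  fix w assume "w \<in> Poly_Mapping.keys x"
  then have "n \<le> deg w" using assms(2) by (auto simp: low_def in_keys_iff not_less[symmetric])
  then show "low n (C (lk x w) * B w)"
    using assms(1) by (auto simp: graded_map_def intro: low_C_mult low_mono)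
qed

lemma lin_eqv:
  assumes "graded_map B" "eqv n x y"
  shows "eqv n (lin B x) (lin B y)"
  using assms lin_low[of B n "x - y"] by (simp add: eqv_def lin_diff)

lemma lin_commute:
  fixes A B :: "'a::graded \<Rightarrow> 'b::graded ps"
  assumes "\<And>u v. A u * B v = B v * A u"
  shows "lin A x * lin B y = lin B y * lin A x"
proof -
  have *: "C a * P * (C b * Q) = C (a * b) * (P * Q)" for a b and P Q :: "'b ps"
  proof -
    have "C a * P * (C b * Q) = C a * (P * (C b * Q))" by (simp add: mult.assoc)
    also have "P * (C b * Q) = C b * (P * Q)" by (rule C_comm2)
    finally show ?thesis by (simp add: C_mult_assoc_left)
  qed
  show ?thesis
    unfolding lin_def sum_product
    by (subst sum.swap) (simp add: * assms mult.commute)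
qed

lemma low_single: "n \<le> deg k \<Longrightarrow> low n (Poly_Mapping.single k c)"
  by (auto simp: low_def lookup_single when_def)

subsection \<open>The shuffle coproduct\<close>

type_synonym T = "nat list ps"
type_synonym TT = "(nat list \<times> nat list) ps"

definition e :: "nat \<Rightarrow> T" where "e a = Poly_Mapping.single [a] 1"
definition I1 :: "nat list \<Rightarrow> TT" where "I1 u = Poly_Mapping.single (u, []) 1"
definition I2 :: "nat list \<Rightarrow> TT" where "I2 v = Poly_Mapping.single ([], v) 1"
definition i1 :: "T \<Rightarrow> TT" where "i1 = lin I1"
definition i2 :: "T \<Rightarrow> TT" where "i2 = lin I2"
definition DW :: "nat list \<Rightarrow> TT" where
  "DW w = foldr (\<lambda>a acc. (I1 [a] + I2 [a]) * acc) w 1"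
definition Delta :: "T \<Rightarrow> TT" where "Delta = lin DW"

lemma list_plus: "(u::'a list) + v = u @ v" by (simp add: plus_list_def)
lemma list_zero: "(0::'a list) = []" by (simp add: zero_list_def)
lemma deg_list: "deg (u :: 'a list) = length u" by (simp add: deg_list_def)
lemma deg_pair: "deg ((u, v) :: 'a list \<times> 'b list) = length u + length v"
  by (simp add: deg_prod_def deg_list_def)

lemma I1_hom: "I1 (u + v) = I1 u * I1 v"
  by (simp add: I1_def mult_single list_plus)
lemma I2_hom: "I2 (u + v) = I2 u * I2 v"
  by (simp add: I2_def mult_single list_plus)
lemma pair_zero: "(([],[]) :: 'a list \<times> 'b list) = 0" by (simp add: zero_prod_def list_zero)
lemma I1_0: "I1 0 = 1"
  by (simp add: I1_def list_zero pair_zero)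
lemma I2_0: "I2 0 = 1"
  by (simp add: I2_def list_zero pair_zero)
lemma DW_Cons: "DW (a # w) = (I1 [a] + I2 [a]) * DW w"
  by (simp add: DW_def)
lemma DW_hom: "DW (u + v) = DW u * DW v"
  by (induction u) (simp_all add: list_plus DW_Cons mult.assoc, simp add: DW_def)
lemma DW_0: "DW 0 = 1"
  by (simp add: DW_def list_zero)
lemma DW_snoc: "DW (w @ [a]) = DW w * (I1 [a] + I2 [a])"
  using DW_hom[of w "[a]"] by (simp add: list_plus DW_Cons DW_def)

lemma I1_graded: "graded_map I1"
  by (auto simp: graded_map_def I1_def intro!: low_single simp: deg_pair deg_list)
lemma I2_graded: "graded_map I2"
  by (auto simp: graded_map_def I2_def intro!: low_single simp: deg_pair deg_list)
lemma DW_graded: "graded_map DW"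
  unfolding graded_map_def
proof
  fix w :: "nat list"
  show "low (deg w) (DW w)"
  proof (induction w)
    case Nil
    then show ?case by (simp add: deg_list)
  next
    case (Cons a w)
    have "low 1 (I1 [a] + I2 [a])"
      by (auto intro!: low_add low_single simp: I1_def I2_def deg_pair)
    from low_mult[OF this Cons.IH] show ?case by (simp add: DW_Cons deg_list)
  qed
qed

lemma i1_mult: "i1 (x * y) = i1 x * i1 y"
  unfolding i1_def by (rule lin_mult) (rule I1_hom)
lemma i2_mult: "i2 (x * y) = i2 x * i2 y"
  unfolding i2_def by (rule lin_mult) (rule I2_hom)
lemma Delta_mult: "Delta (x * y) = Delta x * Delta y"
  unfolding Delta_def by (rule lin_mult) (rule DW_hom)
lemma i1_1: "i1 1 = 1" unfolding i1_def by (rule lin_1) (rule I1_0)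
lemma i2_1: "i2 1 = 1" unfolding i2_def by (rule lin_1) (rule I2_0)
lemma Delta_1: "Delta 1 = 1" unfolding Delta_def by (rule lin_1) (rule DW_0)
lemma i1_ev: "i1 (ev K f x) = ev K f (i1 x)"
  unfolding i1_def by (rule lin_ev) (simp_all add: I1_hom I1_0)
lemma i2_ev: "i2 (ev K f x) = ev K f (i2 x)"
  unfolding i2_def by (rule lin_ev) (simp_all add: I2_hom I2_0)
lemma Delta_ev: "Delta (ev K f x) = ev K f (Delta x)"
  unfolding Delta_def by (rule lin_ev) (simp_all add: DW_hom DW_0)

lemma i12_comm: "i1 x * i2 y = i2 y * i1 x"
  unfolding i1_def i2_def
  by (rule lin_commute) (simp add: I1_def I2_def mult_single list_plus)

lemmas i1_lin = lin_add[of I1, folded i1_def] lin_diff[of I1, folded i1_def]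
  lin_C_mult[of I1, folded i1_def] lin_uminus[of I1, folded i1_def]
lemmas i2_lin = lin_add[of I2, folded i2_def] lin_diff[of I2, folded i2_def]
  lin_C_mult[of I2, folded i2_def] lin_uminus[of I2, folded i2_def]
lemmas Delta_lin = lin_add[of DW, folded Delta_def] lin_diff[of DW, folded Delta_def]
  lin_C_mult[of DW, folded Delta_def] lin_uminus[of DW, folded Delta_def]

lemma i1_eqv: "eqv n x y \<Longrightarrow> eqv n (i1 x) (i1 y)"
  unfolding i1_def by (rule lin_eqv[OF I1_graded])
lemma i2_eqv: "eqv n x y \<Longrightarrow> eqv n (i2 x) (i2 y)"
  unfolding i2_def by (rule lin_eqv[OF I2_graded])
lemma Delta_eqv: "eqv n x y \<Longrightarrow> eqv n (Delta x) (Delta y)"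
  unfolding Delta_def by (rule lin_eqv[OF DW_graded])
lemma i1_low: "low n x \<Longrightarrow> low n (i1 x)"
  unfolding i1_def by (rule lin_low[OF I1_graded])
lemma i2_low: "low n x \<Longrightarrow> low n (i2 x)"
  unfolding i2_def by (rule lin_low[OF I2_graded])
lemma Delta_low: "low n x \<Longrightarrow> low n (Delta x)"
  unfolding Delta_def by (rule lin_low[OF DW_graded])

definition prim :: "nat \<Rightarrow> T \<Rightarrow> bool" where
  "prim K p \<longleftrightarrow> low 1 p \<and> eqv (Suc K) (Delta p) (i1 p + i2 p)"

definition glike :: "nat \<Rightarrow> T \<Rightarrow> bool" where
  "glike K g \<longleftrightarrow> low 1 (g - 1) \<and> eqv (Suc K) (Delta g) (i1 g * i2 g)"

lemma prim_e: "prim K (e a)"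
proof -
  have "Delta (e a) = DW [a]" by (simp add: Delta_def e_def lin_single)
  moreover have "i1 (e a) = I1 [a]" by (simp add: i1_def e_def lin_single)
  moreover have "i2 (e a) = I2 [a]" by (simp add: i2_def e_def lin_single)
  ultimately show ?thesis
    by (simp add: prim_def DW_Cons e_def low_single deg_list, simp add: DW_def)
qed

lemma prim_add: assumes "prim K p" "prim K q" shows "prim K (p + q)"
proof -
  have "eqv (Suc K) (Delta p + Delta q) ((i1 p + i2 p) + (i1 q + i2 q))"
    using assms by (intro eqv_add) (auto simp: prim_def)
  moreover have "(i1 p + i2 p) + (i1 q + i2 q) = i1 (p + q) + i2 (p + q)"
    by (simp add: i1_lin i2_lin algebra_simps)
  ultimately show ?thesis using assms by (auto simp: prim_def Delta_lin intro: low_add)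
qed

lemma prim_C_mult: assumes "prim K p" shows "prim K (C c * p)"
proof -
  have "eqv (Suc K) (C c * Delta p) (C c * (i1 p + i2 p))"
    using assms by (intro eqv_C_mult) (auto simp: prim_def)
  then show ?thesis using assms by (auto simp: prim_def Delta_lin i1_lin i2_lin distrib_left intro: low_C_mult)
qed

lemma prim_eqv: "eqv (Suc K) p q \<Longrightarrow> prim K q \<Longrightarrow> prim K p"
proof -
  assume pq: "eqv (Suc K) p q" and q: "prim K q"
  have "low 1 p" using eqv_low_iff[OF eqv_mono[OF pq]] q by (auto simp: prim_def)
  moreover have "eqv (Suc K) (Delta p) (i1 p + i2 p)"
  proof -
    have "eqv (Suc K) (Delta p) (Delta q)" by (rule Delta_eqv[OF pq])
    also have "eqv (Suc K) (Delta q) (i1 q + i2 q)" using q by (simp add: prim_def)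
    also have "eqv (Suc K) (i1 q + i2 q) (i1 p + i2 p)"
      by (intro eqv_add i1_eqv i2_eqv eqv_sym[OF pq])
    finally show ?thesis .
  qed
  ultimately show ?thesis by (simp add: prim_def)
qed

lemma prim_bracket:
  assumes p: "prim K p" and q: "prim K q"
  shows "prim K (p * q - q * p)"
proof -
  have "low 1 (p * q - q * p)"
    using p q by (auto simp: prim_def intro!: low_diff low_mult_left)
  moreover have "eqv (Suc K) (Delta (p * q - q * p)) (i1 (p * q - q * p) + i2 (p * q - q * p))"
  proof -
    have "Delta (p * q - q * p) = Delta p * Delta q - Delta q * Delta p"
      by (simp add: Delta_lin Delta_mult)
    also have "eqv (Suc K) \<dots> ((i1 p + i2 p) * (i1 q + i2 q) - (i1 q + i2 q) * (i1 p + i2 p))"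
      using p q by (intro eqv_diff eqv_mult) (auto simp: prim_def)
    also have "(i1 p + i2 p) * (i1 q + i2 q) - (i1 q + i2 q) * (i1 p + i2 p)
        = i1 (p * q - q * p) + i2 (p * q - q * p)"
    proof -
      have c1: "i1 p * i2 q = i2 q * i1 p" and c2: "i1 q * i2 p = i2 p * i1 q"
        by (rule i12_comm)+
      show ?thesis
        by (simp add: i1_lin i2_lin i1_mult i2_mult algebra_simps c1 c2)
    qed
    finally show ?thesis .
  qed
  ultimately show ?thesis by (simp add: prim_def)
qed

lemma fEX_0: "fps_nth fEX 0 = 0" by simp
lemma fLN_0: "fps_nth fLN 0 = 0" by simp

lemma low_exp1: "low 1 (z::'a::graded ps) \<Longrightarrow> low 1 (ev K fEXP z - 1)"
proof -
  assume "low 1 z"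
  then have "low 1 (ev K fEX z)" by (rule low_ev) simp
  then show ?thesis unfolding ev_EXP by simp
qed

lemma glike_exp:
  assumes p: "prim K p"
  shows "glike K (ev K fEXP p)"
proof -
  have p1: "low 1 p" using p by (simp add: prim_def)
  have "Delta (ev K fEXP p) = ev K fEXP (Delta p)" by (rule Delta_ev)
  also have "eqv (Suc K) \<dots> (ev K fEXP (i1 p + i2 p))"
    by (rule ev_cong) (use p in \<open>simp add: prim_def\<close>)
  also have "eqv (Suc K) \<dots> (ev K fEXP (i1 p) * ev K fEXP (i2 p))"
    by (rule eqv_sym, rule exp_add) (use p1 in \<open>auto intro: i1_low i2_low i12_comm\<close>)
  also have "ev K fEXP (i1 p) * ev K fEXP (i2 p) = i1 (ev K fEXP p) * i2 (ev K fEXP p)"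
    by (simp add: i1_ev i2_ev)
  finally show ?thesis using low_exp1[OF p1] by (simp add: glike_def)
qed

lemma glike_mult:
  assumes g: "glike K g" and h: "glike K h"
  shows "glike K (g * h)"
proof -
  have eq: "g * h - 1 = (g - 1) * h + (h - 1)" by (simp add: algebra_simps)
  have "low 1 ((g - 1) * h + (h - 1))" using g h by (auto simp: glike_def intro!: low_add low_mult_left)
  then have "low 1 (g * h - 1)" by (simp only: eq)
  moreover have "eqv (Suc K) (Delta (g * h)) (i1 (g * h) * i2 (g * h))"
  proof -
    have "Delta (g * h) = Delta g * Delta h" by (rule Delta_mult)
    also have "eqv (Suc K) \<dots> ((i1 g * i2 g) * (i1 h * i2 h))"
      using g h by (intro eqv_mult) (auto simp: glike_def)
    also have "(i1 g * i2 g) * (i1 h * i2 h) = i1 g * (i2 g * i1 h) * i2 h"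
      by (simp add: mult.assoc)
    also have "i2 g * i1 h = i1 h * i2 g" by (simp add: i12_comm)
    also have "i1 g * (i1 h * i2 g) * i2 h = i1 (g * h) * i2 (g * h)"
      by (simp add: i1_mult i2_mult mult.assoc)
    finally show ?thesis .
  qed
  ultimately show ?thesis by (simp add: glike_def)
qed

lemma glike_log:
  assumes g: "glike K g"
  shows "prim K (ev K fLN (g - 1)) \<and> eqv (Suc K) (ev K fEXP (ev K fLN (g - 1))) g"
proof -
  let ?p = "ev K fLN (g - 1)"
  have g1: "low 1 (g - 1)" using g by (simp add: glike_def)
  have p1: "low 1 ?p" using g1 by (rule low_ev) simp
  have expp: "eqv (Suc K) (ev K fEXP ?p) g"
  proof -
    have "ev K fEXP ?p = 1 + ev K fEX ?p" by (rule ev_EXP)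
    also have "eqv (Suc K) \<dots> (1 + (g - 1))"
      by (intro eqv_add eqv_refl exp_log g1)
    finally show ?thesis by simp
  qed
  let ?r = "Delta ?p" and ?q = "i1 ?p + i2 ?p"
  have r1: "low 1 ?r" using p1 by (rule Delta_low)
  have q1: "low 1 ?q" using p1 by (intro low_add i1_low i2_low)
  have "eqv (Suc K) (ev K fEX ?r) (i1 g * i2 g - 1)"
  proof -
    have "ev K fEX ?r = Delta (ev K fEX ?p)" by (simp add: Delta_ev)
    also have "eqv (Suc K) \<dots> (Delta (g - 1))" by (intro Delta_eqv exp_log g1)
    also have "Delta (g - 1) = Delta g - 1" by (simp add: Delta_lin Delta_1)
    also have "eqv (Suc K) \<dots> (i1 g * i2 g - 1)"
      using g by (intro eqv_diff eqv_refl) (simp add: glike_def)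
    finally show ?thesis .
  qed
  moreover have "eqv (Suc K) (ev K fEX ?q) (i1 g * i2 g - 1)"
  proof -
    have "ev K fEX ?q = ev K fEXP ?q - 1" by (simp add: ev_EXP)
    also have "eqv (Suc K) \<dots> (ev K fEXP (i1 ?p) * ev K fEXP (i2 ?p) - 1)"
      by (intro eqv_diff eqv_refl eqv_sym[OF exp_add]) (use p1 in \<open>auto intro: i1_low i2_low i12_comm\<close>)
    also have "ev K fEXP (i1 ?p) * ev K fEXP (i2 ?p) = i1 (ev K fEXP ?p) * i2 (ev K fEXP ?p)"
      by (simp add: i1_ev i2_ev)
    also have "eqv (Suc K) (i1 (ev K fEXP ?p) * i2 (ev K fEXP ?p) - 1) (i1 g * i2 g - 1)"
      by (intro eqv_diff eqv_refl eqv_mult i1_eqv i2_eqv expp)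
    finally show ?thesis .
  qed
  ultimately have rq: "eqv (Suc K) (ev K fEX ?r) (ev K fEX ?q)"
    by (meson eqv_sym eqv_trans)
  have "eqv (Suc K) ?r (ev K fLN (ev K fEX ?r))" by (rule eqv_sym, rule log_exp[OF r1])
  also have "eqv (Suc K) \<dots> (ev K fLN (ev K fEX ?q))" by (rule ev_cong[OF rq])
  also have "eqv (Suc K) \<dots> ?q" by (rule log_exp[OF q1])
  finally have "eqv (Suc K) ?r ?q" .
  with p1 expp show ?thesis by (simp add: prim_def)
qed

subsection \<open>Dynkin--Specht--Wever\<close>

lemma lin_add_fun: "lin (\<lambda>w. A w + B w) x = lin A x + lin B x"
  by (simp add: lin_def distrib_left sum.distrib)

lemma lin_zero_fun: "lin (\<lambda>w. 0) x = 0"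
  by (simp add: lin_def)

lemma lin_uminus_fun: "lin (\<lambda>w. - A w) x = - lin A x"
  by (simp add: lin_def sum_negf)

definition PhiB :: "nat list \<times> nat list \<Rightarrow> T" where
  "PhiB w = C ((-1) ^ length (fst w) * real (length (snd w))) * Poly_Mapping.single (rev (fst w) @ snd w) 1"
definition PsiB :: "nat list \<times> nat list \<Rightarrow> T" where
  "PsiB w = C ((-1) ^ length (fst w)) * Poly_Mapping.single (rev (fst w) @ snd w) 1"
definition Phi :: "TT \<Rightarrow> T" where "Phi = lin PhiB"
definition Psi :: "TT \<Rightarrow> T" where "Psi = lin PsiB"

lemma single_pair_mult1: "Poly_Mapping.single (u, v) 1 * I1 [a] = Poly_Mapping.single (u @ [a], v) (1::real)"
  by (simp add: I1_def mult_single list_plus)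
lemma single_pair_mult2: "Poly_Mapping.single (u, v) 1 * I2 [a] = Poly_Mapping.single (u, v @ [a]) (1::real)"
  by (simp add: I2_def mult_single list_plus)

lemma e_single: "e a * Poly_Mapping.single w 1 = Poly_Mapping.single (a # w) 1"
  by (simp add: e_def mult_single list_plus)
lemma single_e: "Poly_Mapping.single w 1 * e a = Poly_Mapping.single (w @ [a]) 1"
  by (simp add: e_def mult_single list_plus)

lemma Phi_I1: "Phi (X * I1 [a]) = - (e a * Phi X)"
proof -
  have "Phi (X * I1 [a]) = lin (\<lambda>w. Phi (Poly_Mapping.single w 1 * I1 [a])) X"
    unfolding Phi_def by (rule lin_mult_right_in)
  also have "\<dots> = lin (\<lambda>w. - (e a * PhiB w)) X"
  proof (rule lin_cong)
    fix w :: "nat list \<times> nat list"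
    obtain u v where w: "w = (u, v)" by (cases w)
    have "Phi (Poly_Mapping.single w 1 * I1 [a]) = PhiB (u @ [a], v)"
      by (simp add: w single_pair_mult1 Phi_def lin_single)
    also have "\<dots> = - (e a * PhiB w)"
      by (simp add: PhiB_def w C_comm2 e_single flip: mult_minus_left C_uminus)
    finally show "Phi (Poly_Mapping.single w 1 * I1 [a]) = - (e a * PhiB w)" .
  qed
  also have "\<dots> = - (e a * Phi X)"
    by (simp add: lin_uminus_fun lin_mult_out_left Phi_def)
  finally show ?thesis .
qed

lemma Psi_I1: "Psi (X * I1 [a]) = - (e a * Psi X)"
proof -
  have "Psi (X * I1 [a]) = lin (\<lambda>w. Psi (Poly_Mapping.single w 1 * I1 [a])) X"
    unfolding Psi_def by (rule lin_mult_right_in)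
  also have "\<dots> = lin (\<lambda>w. - (e a * PsiB w)) X"
  proof (rule lin_cong)
    fix w :: "nat list \<times> nat list"
    obtain u v where w: "w = (u, v)" by (cases w)
    have "Psi (Poly_Mapping.single w 1 * I1 [a]) = PsiB (u @ [a], v)"
      by (simp add: w single_pair_mult1 Psi_def lin_single)
    also have "\<dots> = - (e a * PsiB w)"
      by (simp add: PsiB_def w C_comm2 e_single flip: mult_minus_left C_uminus)
    finally show "Psi (Poly_Mapping.single w 1 * I1 [a]) = - (e a * PsiB w)" .
  qed
  also have "\<dots> = - (e a * Psi X)"
    by (simp add: lin_uminus_fun lin_mult_out_left Psi_def)
  finally show ?thesis .
qed

lemma Psi_I2: "Psi (X * I2 [a]) = Psi X * e a"
proof -
  have "Psi (X * I2 [a]) = lin (\<lambda>w. Psi (Poly_Mapping.single w 1 * I2 [a])) X"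
    unfolding Psi_def by (rule lin_mult_right_in)
  also have "\<dots> = lin (\<lambda>w. PsiB w * e a) X"
  proof (rule lin_cong)
    fix w :: "nat list \<times> nat list"
    obtain u v where w: "w = (u, v)" by (cases w)
    have "Psi (Poly_Mapping.single w 1 * I2 [a]) = PsiB (u, v @ [a])"
      by (simp add: w single_pair_mult2 Psi_def lin_single)
    also have "\<dots> = PsiB w * e a"
      by (simp add: PsiB_def w mult.assoc single_e)
    finally show "Psi (Poly_Mapping.single w 1 * I2 [a]) = PsiB w * e a" .
  qed
  also have "\<dots> = Psi X * e a"
    by (simp add: lin_mult_out_right Psi_def)
  finally show ?thesis .
qed

lemma Phi_I2: "Phi (X * I2 [a]) = Phi X * e a + Psi X * e a"
proof -
  have "Phi (X * I2 [a]) = lin (\<lambda>w. Phi (Poly_Mapping.single w 1 * I2 [a])) X"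
    unfolding Phi_def by (rule lin_mult_right_in)
  also have "\<dots> = lin (\<lambda>w. PhiB w * e a + PsiB w * e a) X"
  proof (rule lin_cong)
    fix w :: "nat list \<times> nat list"
    obtain u v where w: "w = (u, v)" by (cases w)
    have "Phi (Poly_Mapping.single w 1 * I2 [a]) = PhiB (u, v @ [a])"
      by (simp add: w single_pair_mult2 Phi_def lin_single)
    also have "\<dots> = C ((-1) ^ length u * real (length v) + (-1) ^ length u) * Poly_Mapping.single (rev u @ v @ [a]) 1"
      by (simp add: PhiB_def algebra_simps)
    also have "\<dots> = PhiB w * e a + PsiB w * e a"
      by (simp add: PhiB_def PsiB_def w mult.assoc single_e C_add distrib_right)
    finally show "Phi (Poly_Mapping.single w 1 * I2 [a]) = PhiB w * e a + PsiB w * e a" .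
  qed
  also have "\<dots> = Phi X * e a + Psi X * e a"
    by (simp add: lin_add_fun lin_mult_out_right Phi_def Psi_def)
  finally show ?thesis .
qed

lemma single_nil: "Poly_Mapping.single [] (1::real) = 1"
  by (metis list_zero single_one)
lemma single_nil2: "Poly_Mapping.single ([], []) (1::real) = 1"
  by (metis pair_zero single_one)

lemma Psi_1: "Psi 1 = 1"
  unfolding Psi_def by (rule lin_1) (simp add: PsiB_def zero_prod_def list_zero single_nil)

lemma Phi_1: "Phi 1 = 0"
proof -
  have "Phi (Poly_Mapping.single 0 1) = C 1 * PhiB 0" unfolding Phi_def by (rule lin_single)
  then show ?thesis by (simp add: PhiB_def zero_prod_def list_zero single_nil2)
qed

lemma Psi_DW: "Psi (DW w) = (if w = [] then 1 else 0)"
proof (induction w rule: rev_induct)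
  case Nil
  then show ?case by (simp add: DW_def Psi_1)
next
  case (snoc a w)
  have "Psi (DW (w @ [a])) = Psi (DW w * I1 [a]) + Psi (DW w * I2 [a])"
    by (simp add: DW_snoc distrib_left Psi_def lin_add)
  also have "\<dots> = - (e a * Psi (DW w)) + Psi (DW w) * e a"
    by (simp add: Psi_I1 Psi_I2)
  finally show ?case using snoc by simp
qed

fun lbr :: "nat list \<Rightarrow> T" where
  "lbr [] = 0"
| "lbr [a] = e a"
| "lbr (a # b # r) = lbr (b # r) * e a - e a * lbr (b # r)"

definition lb :: "nat list \<Rightarrow> T" where "lb w = lbr (rev w)"

lemma lb_snoc: "lb (w @ [a]) = (if w = [] then e a else lb w * e a - e a * lb w)"
  by (cases "rev w") (auto simp: lb_def)

lemma Phi_DW: "Phi (DW w) = lb w"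
proof (induction w rule: rev_induct)
  case Nil
  then show ?case by (simp add: DW_def Phi_1 lb_def)
next
  case (snoc a w)
  have "Phi (DW (w @ [a])) = Phi (DW w * I1 [a]) + Phi (DW w * I2 [a])"
    by (simp add: DW_snoc distrib_left Phi_def lin_add)
  also have "\<dots> = - (e a * Phi (DW w)) + Phi (DW w) * e a + Psi (DW w) * e a"
    by (simp add: Phi_I1 Phi_I2)
  finally have "Phi (DW (w @ [a])) = - (e a * lb w) + lb w * e a + Psi (DW w) * e a"
    using snoc by simp
  moreover have "lb [] = 0" "lb [a] = e a" by (simp_all add: lb_def)
  ultimately show ?case by (cases "w = []") (simp_all add: Psi_DW lb_snoc)
qed

definition Dg :: "T \<Rightarrow> T" where "Dg = lin (\<lambda>w. C (real (length w)) * Poly_Mapping.single w 1)"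
definition Ng :: "T \<Rightarrow> T" where "Ng = lin (\<lambda>w. C (1 / real (length w)) * Poly_Mapping.single w 1)"
definition hom :: "nat \<Rightarrow> T \<Rightarrow> bool" where "hom n x \<longleftrightarrow> (\<forall>w\<in>Poly_Mapping.keys x. length w = n)"

lemma Phi_i2: "Phi (i2 p) = Dg p"
  unfolding Phi_def i2_def Dg_def lin_comp
  by (rule lin_cong) (simp add: I2_def lin_single PhiB_def)

lemma Phi_i1: "Phi (i1 p) = 0"
  unfolding Phi_def i1_def lin_comp
  by (simp add: I1_def lin_single PhiB_def lin_zero_fun)

lemma Ng_Dg: "low 1 p \<Longrightarrow> Ng (Dg p) = p"
proof -
  assume p: "low 1 p"
  have "Ng (Dg p) = lin (\<lambda>w. Poly_Mapping.single w 1) p"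
    unfolding Ng_def Dg_def lin_comp
  proof (rule lin_cong)
    fix w assume "w \<in> Poly_Mapping.keys p"
    then have "w \<noteq> []" using p by (auto simp: low_def in_keys_iff deg_list)
    then show "lin (\<lambda>w. C (1 / real (length w)) * Poly_Mapping.single w 1) (C (real (length w)) * Poly_Mapping.single w 1)
        = Poly_Mapping.single w 1"
      by (simp add: lin_C_mult lin_single C_mult_assoc_left)
  qed
  then show ?thesis by (simp add: lin_id)
qed

lemma hom_0[simp]: "hom n 0" by (simp add: hom_def)
lemma hom_e: "hom 1 (e a)" by (simp add: hom_def e_def)
lemma hom_add: "hom n x \<Longrightarrow> hom n y \<Longrightarrow> hom n (x + y)"
  unfolding hom_def using keys_add[of x y] by blast
lemma hom_uminus: "hom n x \<Longrightarrow> hom n (- x)"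
  unfolding hom_def by simp
lemma hom_diff: "hom n x \<Longrightarrow> hom n y \<Longrightarrow> hom n (x - y)"
  unfolding hom_def using keys_diff[of x y] by blast
lemma hom_mult: assumes "hom m x" "hom n y" shows "hom (m + n) (x * y)"
  unfolding hom_def
proof
  fix w assume "w \<in> Poly_Mapping.keys (x * y)"
  then obtain a b where "w = a + b" "a \<in> Poly_Mapping.keys x" "b \<in> Poly_Mapping.keys y"
    using keys_mult[of x y] by blast
  then show "length w = m + n" using assms by (simp add: hom_def list_plus)
qed

lemma hom_lbr: "hom (length r) (lbr r)"
proof (induction r rule: lbr.induct)
  case (3 a b r)
  have h1: "hom (length (b # r) + 1) (lbr (b # r) * e a)" by (rule hom_mult[OF 3(1) hom_e])
  have h2: "hom (1 + length (b # r)) (e a * lbr (b # r))" by (rule hom_mult[OF hom_e 3(1)])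
  have "hom (length (a # b # r)) (lbr (b # r) * e a - e a * lbr (b # r))"
    by (rule hom_diff) (use h1 h2 in simp_all)
  then show ?case by simp
qed (simp_all add: hom_e[simplified])

lemma hom_lb: "hom (length w) (lb w)"
  using hom_lbr[of "rev w"] by (simp add: lb_def)

lemma Ng_hom: "hom n x \<Longrightarrow> Ng x = C (1 / real n) * x"
proof -
  assume h: "hom n x"
  have "Ng x = lin (\<lambda>w. C (1 / real n) * Poly_Mapping.single w 1) x"
    unfolding Ng_def by (rule lin_cong) (use h in \<open>simp add: hom_def\<close>)
  also have "\<dots> = C (1 / real n) * x" by (simp add: lin_mult_out_left lin_id)
  finally show ?thesis .
qed

lemma Phi_graded: "graded_map PhiB"
  unfolding graded_map_def
proof
  fix w :: "nat list \<times> nat list"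
  obtain u v where w: "w = (u, v)" by (cases w)
  show "low (deg w) (PhiB w)"
    unfolding PhiB_def by (rule low_C_mult, rule low_single) (simp add: w deg_pair deg_list)
qed

lemma Ng_graded: "graded_map (\<lambda>w::nat list. C (1 / real (length w)) * Poly_Mapping.single w 1)"
  unfolding graded_map_def
proof
  fix w :: "nat list"
  show "low (deg w) (C (1 / real (length w)) * Poly_Mapping.single w 1)"
    by (intro low_C_mult low_single order_refl)
qed

lemma DSW:
  assumes p: "prim K p"
  shows "eqv (Suc K) p (lin (\<lambda>w. C (1 / real (length w)) * lb w) p)"
proof -
  have p1: "low 1 p" using p by (simp add: prim_def)
  have dg: "Dg p = Phi (i1 p + i2 p)"
  proof -
    have "Phi (i1 p + i2 p) = Phi (i1 p) + Phi (i2 p)" unfolding Phi_def by (rule lin_add)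
    then show ?thesis by (simp add: Phi_i1 Phi_i2)
  qed
  have "p = Ng (Phi (i1 p + i2 p))" using Ng_Dg[OF p1] dg by simp
  also have "eqv (Suc K) (Ng (Phi (i1 p + i2 p))) (Ng (Phi (Delta p)))"
  proof -
    have "eqv (Suc K) (i1 p + i2 p) (Delta p)" using p by (simp add: prim_def eqv_sym)
    then have "eqv (Suc K) (Phi (i1 p + i2 p)) (Phi (Delta p))"
      unfolding Phi_def by (rule lin_eqv[OF Phi_graded])
    then show ?thesis unfolding Ng_def by (rule lin_eqv[OF Ng_graded])
  qed
  also have "Ng (Phi (Delta p)) = lin (\<lambda>w. Ng (Phi (DW w))) p"
    unfolding Ng_def Phi_def Delta_def by (rule lin_comp2)
  also have "\<dots> = lin (\<lambda>w. C (1 / real (length w)) * lb w) p"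
    by (rule lin_cong) (simp add: Phi_DW Ng_hom[OF hom_lb])
  finally show ?thesis .
qed


lemma lookup_mult_list:
  fixes x y :: "'a list ps"
  shows "lk (x * y) w = (\<Sum>i\<le>length w. lk x (take i w) * lk y (drop i w))"
proof -
  have inner: "Sum_any (\<lambda>q. lk y q when w = l + q)
      = (if take (length l) w = l then lk y (drop (length l) w) else 0)" for l
  proof (cases "take (length l) w = l")
    case True
    have "Sum_any (\<lambda>q. lk y q when w = l + q) = Sum_any (\<lambda>q. lk y q when q = drop (length l) w)"
    proof (rule Sum_any.cong)
      fix q
      have "w = l + q \<longleftrightarrow> q = drop (length l) w"
        using True by (auto simp: list_plus) (metis append_take_drop_id)
      then show "(lk y q when w = l + q) = (lk y q when q = drop (length l) w)" by simp
    qed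
    then show ?thesis using True by simp
  next
    case False
    have "(\<lambda>q. lk y q when w = l + q) = (\<lambda>q::'a list. 0)"
      using False by (auto simp: list_plus when_def fun_eq_iff)
    then have "Sum_any (\<lambda>q. lk y q when w = l + q) = Sum_any (\<lambda>q::'a list. (0::real))" by (rule arg_cong)
    then show ?thesis using False by simp
  qed
  let ?f = "\<lambda>l. lk x l * (if take (length l) w = l then lk y (drop (length l) w) else 0)"
  have "lk (x * y) w = Sum_any ?f"
    unfolding lookup_mult inner ..
  also have "\<dots> = sum ?f ((\<lambda>i. take i w) ` {..length w})"
  proof (rule Sum_any.expand_superset)
    show "finite ((\<lambda>i. take i w) ` {..length w})" by simp
    show "{a. ?f a \<noteq> 0} \<subseteq> (\<lambda>i. take i w) ` {..length w}"
    proof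
      fix l assume "l \<in> {a. ?f a \<noteq> 0}"
      then have "take (length l) w = l" by (auto split: if_splits)
      moreover have "length l \<le> length w"
      proof -
        have "length (take (length l) w) \<le> length w" by simp
        then show ?thesis using \<open>take (length l) w = l\<close> by simp
      qed
      ultimately show "l \<in> (\<lambda>i. take i w) ` {..length w}" by force
    qed
  qed
  also have "\<dots> = sum (?f \<circ> (\<lambda>i. take i w)) {..length w}"
    by (rule sum.reindex) (auto intro!: inj_onI simp: min_def dest: arg_cong[of _ _ length] split: if_splits)
  also have "\<dots> = (\<Sum>i\<le>length w. lk x (take i w) * lk y (drop i w))"
    by (rule sum.cong) (auto simp: min_def)
  finally show ?thesis .
qed

definition tr :: "nat \<Rightarrow> T \<Rightarrow> T" where
  "tr K x = Abs_poly_mapping (\<lambda>w. if length w \<le> K then lk x w else 0)"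

lemma lookup_tr: "lk (tr K x) w = (if length w \<le> K then lk x w else 0)"
proof -
  have "finite {w. (if length w \<le> K then lk x w else 0) \<noteq> 0}"
    by (rule finite_subset[of _ "Poly_Mapping.keys x"]) (auto simp: in_keys_iff)
  then show ?thesis by (simp add: tr_def)
qed

lemma eqv_iff: "eqv (Suc K) (x::T) y \<longleftrightarrow> (\<forall>w. length w \<le> K \<longrightarrow> lk x w = lk y w)"
  by (auto simp: eqv_def low_def deg_list lookup_minus less_Suc_eq_le)

lemma tr_eqv: "eqv (Suc K) (tr K x) x"
  by (simp add: eqv_iff lookup_tr)

lemma eqv_tr: "eqv (Suc K) x y \<Longrightarrow> tr K x = tr K y"
  by (rule poly_mapping_eqI) (simp add: eqv_iff lookup_tr)

lemma tr_eq_eqv: "tr K x = tr K y \<Longrightarrow> eqv (Suc K) x y"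
  by (metis eqv_sym eqv_trans tr_eqv)

lemma tr_tr[simp]: "tr K (tr K x) = tr K x"
  by (rule eqv_tr[OF tr_eqv])

lemma tr_add: "tr K (x + y) = tr K x + tr K y"
  by (rule poly_mapping_eqI) (simp add: lookup_tr lookup_add)
lemma tr_diff: "tr K (x - y) = tr K x - tr K y"
  by (rule poly_mapping_eqI) (simp add: lookup_tr lookup_minus)
lemma tr_uminus: "tr K (- x) = - tr K x"
  by (rule poly_mapping_eqI) (simp add: lookup_tr)
lemma tr_C_mult: "tr K (C c * x) = C c * tr K x"
  by (rule poly_mapping_eqI) (simp add: lookup_tr lookup_C_mult)
lemma tr_0[simp]: "tr K 0 = 0"
  by (rule poly_mapping_eqI) (simp add: lookup_tr)
lemma tr_1[simp]: "tr K 1 = 1"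
  by (rule poly_mapping_eqI) (simp add: lookup_tr lookup_one when_def list_zero)
lemma tr_sum: "tr K (sum f A) = (\<Sum>i\<in>A. tr K (f i))"
  by (induction A rule: infinite_finite_induct) (auto simp: tr_add)

lemma tr_mult_tr: "tr K (tr K x * tr K y) = tr K (x * y)"
  by (intro eqv_tr eqv_mult tr_eqv)

lemma low_tr: "low n x \<Longrightarrow> low n (tr K x)"
  by (simp add: low_def lookup_tr)

lemma tr_low_zero: "low (Suc K) x \<Longrightarrow> tr K x = 0"
  by (rule poly_mapping_eqI) (simp add: lookup_tr low_def deg_list)

subsection \<open>Translation of the definitions\<close>

abbreviation R :: "T \<Rightarrow> tensor" where "R \<equiv> lk"

lemma R_inj: "R x = R y \<Longrightarrow> x = y"
  by (rule poly_mapping_eqI) simp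

lemma R_add: "tadd (R x) (R y) = R (x + y)"
  by (simp add: tadd_def fun_eq_iff lookup_add)
lemma R_sub: "tsub (R x) (R y) = R (x - y)"
  by (simp add: tsub_def fun_eq_iff lookup_minus)
lemma R_scale: "tscale c (R x) = R (C c * x)"
  by (simp add: tscale_def fun_eq_iff lookup_C_mult)
lemma R_unit: "tunit = R 1"
  by (simp add: tunit_def fun_eq_iff lookup_one when_def list_zero)
lemma R_zero: "(\<lambda>w. 0) = R 0"
  by (simp add: fun_eq_iff)
lemma R_mul: "tmul K (R x) (R y) = R (tr K (x * y))"
  by (simp add: tmul_def fun_eq_iff lookup_tr lookup_mult_list)
lemma R_gen: "tgen K i = R (tr K (e i))"
  by (auto simp: tgen_def fun_eq_iff lookup_tr e_def lookup_single when_def)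
lemma R_bracket: "tbracket K (R x) (R y) = R (tr K (x * y - y * x))"
  by (simp add: tbracket_def R_mul R_sub tr_diff)

lemma R_pow: "tpow K (R x) n = R (tr K (x ^ n))"
proof (induction n)
  case 0
  then show ?case by (simp add: R_unit)
next
  case (Suc n)
  have "tpow K (R x) (Suc n) = R (tr K (x * tr K (x ^ n)))"
    by (simp add: Suc R_mul)
  also have "tr K (x * tr K (x ^ n)) = tr K (x * x ^ n)"
    by (intro eqv_tr eqv_mult eqv_refl tr_eqv)
  finally show ?case by simp
qed

lemma R_exp: "texp K (R x) = R (tr K (ev K fEXP x))"
  by (simp add: texp_def fun_eq_iff R_pow lookup_tr ev_def lookup_sum lookup_C_mult sum_divide_distrib)

lemma R_log: "tlog K (R s) = R (tr K (ev K fLN (s - 1)))"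
proof -
  have "tlog K (R s) = (\<lambda>w. \<Sum>l\<in>{1..K}. ((-1) ^ (l + 1) / real l) * lk (tr K ((s - 1) ^ l)) w)"
    by (simp add: tlog_def R_unit R_sub R_pow)
  also have "\<dots> = R (tr K (ev K fLN (s - 1)))"
  proof
    fix w
    have "lk (tr K (ev K fLN (s - 1))) w = (\<Sum>l\<le>K. fps_nth fLN l * lk (tr K ((s - 1) ^ l)) w)"
      by (simp add: ev_def tr_sum tr_C_mult lookup_sum lookup_C_mult)
    also have "\<dots> = (\<Sum>l\<in>{1..K}. fps_nth fLN l * lk (tr K ((s - 1) ^ l)) w)"
      by (rule sum.mono_neutral_right) (auto simp: fps_ln_nth)
    also have "\<dots> = (\<Sum>l\<in>{1..K}. ((-1) ^ (l + 1) / real l) * lk (tr K ((s - 1) ^ l)) w)"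
    proof (rule sum.cong)
      fix l assume "l \<in> {1..K}"
      then obtain j where j: "l = Suc j" by (cases l) auto
      then have "(-1::real) ^ (l - 1) = (-1) ^ (l + 1)" by simp
      then show "fps_nth fLN l * lk (tr K ((s - 1) ^ l)) w = ((-1) ^ (l + 1) / real l) * lk (tr K ((s - 1) ^ l)) w"
        using \<open>l \<in> {1..K}\<close> by (simp add: fps_ln_nth)
    qed simp
    finally show "(\<Sum>l\<in>{1..K}. ((-1) ^ (l + 1) / real l) * lk (tr K ((s - 1) ^ l)) w) = R (tr K (ev K fLN (s - 1))) w"
      by simp
  qed
  finally show ?thesis .
qed

definition geo :: "nat \<Rightarrow> T \<Rightarrow> T" where "geo K v = (\<Sum>l\<le>K. v ^ l)"

lemma R_inv: "tinv K (R m) = R (tr K (geo K (1 - m)))"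
  by (simp add: tinv_def fun_eq_iff R_unit R_sub R_pow geo_def tr_sum lookup_sum)


definition alph :: "nat \<Rightarrow> T \<Rightarrow> bool" where
  "alph d x \<longleftrightarrow> (\<forall>w\<in>Poly_Mapping.keys x. set w \<subseteq> {..<d})"

lemma alph_0[simp]: "alph d 0" by (simp add: alph_def)
lemma alph_1[simp]: "alph d 1" by (simp add: alph_def lookup_one when_def list_zero in_keys_iff)
lemma alph_add: "alph d x \<Longrightarrow> alph d y \<Longrightarrow> alph d (x + y)"
  unfolding alph_def using keys_add[of x y] by blast
lemma alph_diff: "alph d x \<Longrightarrow> alph d y \<Longrightarrow> alph d (x - y)"
  unfolding alph_def using keys_diff[of x y] by blast
lemma alph_uminus: "alph d x \<Longrightarrow> alph d (- x)"
  unfolding alph_def by simp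
lemma alph_C_mult: "alph d x \<Longrightarrow> alph d (C c * x)"
  unfolding alph_def by (auto simp: in_keys_iff lookup_C_mult)
lemma alph_mult: assumes "alph d x" "alph d y" shows "alph d (x * y)"
  unfolding alph_def
proof
  fix w assume "w \<in> Poly_Mapping.keys (x * y)"
  then obtain a b where "w = a + b" "a \<in> Poly_Mapping.keys x" "b \<in> Poly_Mapping.keys y"
    using keys_mult[of x y] by blast
  then show "set w \<subseteq> {..<d}" using assms by (auto simp: alph_def list_plus)
qed
lemma alph_power: "alph d x \<Longrightarrow> alph d (x ^ n)"
  by (induction n) (auto intro: alph_mult)
lemma alph_sum: "(\<And>i. i \<in> A \<Longrightarrow> alph d (f i)) \<Longrightarrow> alph d (sum f A)"
  by (induction A rule: infinite_finite_induct) (auto intro: alph_add)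
lemma alph_ev: "alph d x \<Longrightarrow> alph d (ev K f x)"
  unfolding ev_def by (intro alph_sum alph_C_mult alph_power)
lemma alph_tr: "alph d x \<Longrightarrow> alph d (tr K x)"
  unfolding alph_def by (auto simp: in_keys_iff lookup_tr split: if_splits)
lemma alph_e: "i < d \<Longrightarrow> alph d (e i)"
  by (simp add: alph_def e_def)
lemma alph_geo: "alph d x \<Longrightarrow> alph d (geo K x)"
  unfolding geo_def by (intro alph_sum alph_power)

definition Lset :: "nat \<Rightarrow> nat \<Rightarrow> T set" where
  "Lset d K = {a. prim K a \<and> tr K a = a \<and> alph d a}"

lemma prim_0: "prim K 0"
  by (simp add: prim_def Delta_def i1_def i2_def)

lemma Lset_0: "0 \<in> Lset d K"
  by (simp add: Lset_def prim_0)

lemma Lset_add: "a \<in> Lset d K \<Longrightarrow> b \<in> Lset d K \<Longrightarrow> a + b \<in> Lset d K"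
  by (auto simp: Lset_def prim_add tr_add alph_add)

lemma Lset_C_mult: "a \<in> Lset d K \<Longrightarrow> C c * a \<in> Lset d K"
  by (auto simp: Lset_def prim_C_mult tr_C_mult alph_C_mult)

lemma Lset_uminus: "a \<in> Lset d K \<Longrightarrow> - a \<in> Lset d K"
  using Lset_C_mult[of a d K "-1"] by (simp add: C_uminus)

lemma Lset_sum: "(\<And>i. i \<in> A \<Longrightarrow> f i \<in> Lset d K) \<Longrightarrow> sum f A \<in> Lset d K"
  by (induction A rule: infinite_finite_induct) (auto intro: Lset_add Lset_0)

lemma Lset_low1: "a \<in> Lset d K \<Longrightarrow> low 1 a"
  by (simp add: Lset_def prim_def)

lemma lie_to_poly: "a \<in> lie_alg d K \<Longrightarrow> \<exists>x\<in>Lset d K. a = R x"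
proof (induction rule: lie_alg.induct)
  case zero
  then show ?case using Lset_0 by (auto simp: R_zero)
next
  case (gen i)
  have "tr K (e i) \<in> Lset d K"
    unfolding Lset_def using gen
    by (auto intro: prim_eqv[OF tr_eqv prim_e] alph_tr alph_e)
  then show ?case by (auto simp: R_gen)
next
  case (add a b)
  then show ?case by (auto simp: R_add intro: Lset_add)
next
  case (scale a c)
  then show ?case by (auto simp: R_scale intro: Lset_C_mult)
next
  case (bracket a b)
  then obtain x y where xy: "x \<in> Lset d K" "y \<in> Lset d K" "a = R x" "b = R y" by blast
  have "tr K (x * y - y * x) \<in> Lset d K"
    using xy unfolding Lset_def
    by (auto intro!: prim_eqv[OF tr_eqv prim_bracket] alph_tr alph_diff alph_mult)
  then show ?case using xy by (auto simp: R_bracket)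
qed

lemma lie_sum: "(\<And>i. i \<in> A \<Longrightarrow> R (f i) \<in> lie_alg d K) \<Longrightarrow> R (sum f A) \<in> lie_alg d K"
proof (induction A rule: infinite_finite_induct)
  case (infinite A)
  then show ?case using lie_alg.zero by (simp add: R_zero[symmetric])
next
  case empty
  then show ?case using lie_alg.zero by (simp add: R_zero[symmetric])
next
  case (insert x F)
  then show ?case using lie_alg.add[of "R (f x)" d K "R (sum f F)"] by (simp add: R_add)
qed

lemma lie_lb: "set w \<subseteq> {..<d} \<Longrightarrow> R (tr K (lb w)) \<in> lie_alg d K"
proof (induction w rule: rev_induct)
  case Nil
  then show ?case using lie_alg.zero by (simp add: lb_def R_zero[symmetric])
next
  case (snoc a w)
  show ?case
  proof (cases "w = []")
    case True
    have "lb [a] = e a" by (simp add: lb_def)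
    then show ?thesis using True snoc lie_alg.gen[of a d K] by (simp add: R_gen)
  next
    case False
    have "tr K (lb (w @ [a])) = tr K (tr K (lb w) * tr K (e a) - tr K (e a) * tr K (lb w))"
      using False by (simp add: lb_snoc) (intro eqv_tr eqv_diff eqv_mult eqv_sym[OF tr_eqv])
    then have "R (tr K (lb (w @ [a]))) = tbracket K (R (tr K (lb w))) (R (tr K (e a)))"
      by (simp add: R_bracket)
    moreover have "R (tr K (lb w)) \<in> lie_alg d K" using snoc by simp
    moreover have "R (tr K (e a)) \<in> lie_alg d K" using snoc lie_alg.gen[of a d K] by (simp add: R_gen)
    ultimately show ?thesis by (simp add: lie_alg.bracket)
  qed
qed

lemma poly_to_lie:
  assumes x: "x \<in> Lset d K"
  shows "R x \<in> lie_alg d K"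
proof -
  have p: "prim K x" and trx: "tr K x = x" and al: "alph d x" using x by (auto simp: Lset_def)
  have "x = tr K (lin (\<lambda>w. C (1 / real (length w)) * lb w) x)"
    using eqv_tr[OF DSW[OF p]] trx by simp
  also have "\<dots> = (\<Sum>w\<in>Poly_Mapping.keys x. C (lk x w) * (C (1 / real (length w)) * tr K (lb w)))"
    by (simp add: lin_def tr_sum tr_C_mult)
  finally have eq: "x = \<dots>" .
  have "R (\<Sum>w\<in>Poly_Mapping.keys x. C (lk x w) * (C (1 / real (length w)) * tr K (lb w))) \<in> lie_alg d K"
  proof (rule lie_sum)
    fix w assume "w \<in> Poly_Mapping.keys x"
    then have "set w \<subseteq> {..<d}" using al by (auto simp: alph_def)
    then have "R (tr K (lb w)) \<in> lie_alg d K" by (rule lie_lb)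
    then show "R (C (lk x w) * (C (1 / real (length w)) * tr K (lb w))) \<in> lie_alg d K"
      by (metis R_scale lie_alg.scale)
  qed
  then show ?thesis using eq by simp
qed

lemma lie_alg_eq: "lie_alg d K = R ` Lset d K"
  using lie_to_poly poly_to_lie by blast


definition mulp :: "nat \<Rightarrow> T \<Rightarrow> T \<Rightarrow> T" where "mulp K x y = tr K (x * y)"
definition invp :: "nat \<Rightarrow> T \<Rightarrow> T" where "invp K m = tr K (geo K (1 - m))"
definition lgp :: "nat \<Rightarrow> T \<Rightarrow> T" where "lgp K s = tr K (ev K fLN (s - 1))"
definition exq :: "nat \<Rightarrow> T \<Rightarrow> T" where "exq K z = tr K (ev K fEXP z)"

definition Gp :: "nat \<Rightarrow> nat \<Rightarrow> T set" where "Gp d K = exq K ` Lset d K"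

lemma grp_eq: "grp d K = R ` Gp d K"
  by (auto simp: grp_def Gp_def lie_alg_eq image_image R_exp exq_def)

lemma tr_minus_1: "tr K x - 1 = tr K (x - 1)"
  by (simp add: tr_diff)

lemma Gp_low: "g \<in> Gp d K \<Longrightarrow> low 1 (g - 1)"
proof -
  assume "g \<in> Gp d K"
  then obtain a where a: "a \<in> Lset d K" and g: "g = exq K a" by (auto simp: Gp_def)
  have "low 1 (ev K fEXP a - 1)" by (rule low_exp1[OF Lset_low1[OF a]])
  then have "low 1 (tr K (ev K fEXP a - 1))" by (rule low_tr)
  then show ?thesis by (simp add: tr_minus_1 g exq_def)
qed

lemma Gp_tr: "g \<in> Gp d K \<Longrightarrow> tr K g = g"
  by (auto simp: Gp_def exq_def)

lemma Gp_alph: "g \<in> Gp d K \<Longrightarrow> alph d g"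
  by (auto simp: Gp_def exq_def Lset_def intro!: alph_tr alph_ev)

lemma glike_eqv: "eqv (Suc K) g h \<Longrightarrow> glike K h \<Longrightarrow> glike K g"
proof -
  assume gh: "eqv (Suc K) g h" and h: "glike K h"
  have "eqv 1 (g - 1) (h - 1)" using eqv_mono[OF gh] by (intro eqv_diff eqv_refl) auto
  then have "low 1 (g - 1)" using h eqv_low_iff by (auto simp: glike_def)
  moreover have "eqv (Suc K) (Delta g) (i1 g * i2 g)"
  proof -
    have "eqv (Suc K) (Delta g) (Delta h)" by (rule Delta_eqv[OF gh])
    also have "eqv (Suc K) (Delta h) (i1 h * i2 h)" using h by (simp add: glike_def)
    also have "eqv (Suc K) (i1 h * i2 h) (i1 g * i2 g)"
      by (intro eqv_mult i1_eqv i2_eqv eqv_sym[OF gh])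
    finally show ?thesis .
  qed
  ultimately show ?thesis by (simp add: glike_def)
qed

lemma exq_Lset_log:
  assumes a: "a \<in> Lset d K"
  shows "lgp K (exq K a) = a"
proof -
  have a1: "low 1 a" using a by (rule Lset_low1)
  have "eqv (Suc K) (exq K a - 1) (ev K fEX a)"
    unfolding exq_def tr_minus_1 ev_EXP by (simp add: tr_eqv)
  then have "eqv (Suc K) (ev K fLN (exq K a - 1)) (ev K fLN (ev K fEX a))" by (rule ev_cong)
  also have "eqv (Suc K) \<dots> a" by (rule log_exp[OF a1])
  finally have "tr K (ev K fLN (exq K a - 1)) = tr K a" by (rule eqv_tr)
  then show ?thesis using a by (simp add: lgp_def Lset_def)
qed

lemma Gp_mult:
  assumes g: "g \<in> Gp d K" and h: "h \<in> Gp d K"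
  shows "mulp K g h \<in> Gp d K"
proof -
  obtain a b where a: "a \<in> Lset d K" and b: "b \<in> Lset d K" and ga: "g = exq K a" and hb: "h = exq K b"
    using g h by (auto simp: Gp_def)
  let ?q = "ev K fEXP a * ev K fEXP b"
  have q: "glike K ?q"
    using a b by (intro glike_mult glike_exp) (auto simp: Lset_def)
  let ?p = "ev K fLN (?q - 1)"
  have pp: "prim K ?p" and ep: "eqv (Suc K) (ev K fEXP ?p) ?q"
    using glike_log[OF q] by auto
  let ?p' = "tr K ?p"
  have p'L: "?p' \<in> Lset d K"
    unfolding Lset_def using a b
    by (auto intro!: prim_eqv[OF tr_eqv pp] alph_tr alph_ev alph_diff alph_mult simp: Lset_def)
  have "exq K ?p' = tr K (ev K fEXP ?p)"
    unfolding exq_def by (intro eqv_tr ev_cong tr_eqv)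
  also have "\<dots> = tr K ?q" by (rule eqv_tr[OF ep])
  also have "\<dots> = mulp K g h"
    unfolding mulp_def ga hb exq_def by (intro eqv_tr eqv_mult eqv_sym[OF tr_eqv])
  finally have "mulp K g h = exq K ?p'" by simp
  then show ?thesis unfolding Gp_def using p'L by blast
qed

lemma geo_Suc: "geo (Suc K) v = geo K v + v ^ Suc K"
  unfolding geo_def by (rule sum.atMost_Suc)

lemma geo_tele: "(1 - v) * geo K v = 1 - v ^ Suc K" "geo K v * (1 - v) = 1 - v ^ Suc K"
proof -
  have "(1 - v) * geo K v = 1 - v ^ Suc K \<and> geo K v * (1 - v) = 1 - v ^ Suc K"
  proof (induction K)
    case 0
    then show ?case by (simp add: geo_def)
  next
    case (Suc K)
    have "(1 - v) * geo (Suc K) v = (1 - v) * geo K v + (1 - v) * v ^ Suc K"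
      by (simp only: geo_Suc distrib_left)
    also have "\<dots> = 1 - v ^ Suc K + (v ^ Suc K - v * v ^ Suc K)"
      using Suc by (simp only: left_diff_distrib mult_1_left)
    also have "\<dots> = 1 - v ^ Suc (Suc K)" by simp
    finally have A: "(1 - v) * geo (Suc K) v = 1 - v ^ Suc (Suc K)" .
    have "geo (Suc K) v * (1 - v) = geo K v * (1 - v) + v ^ Suc K * (1 - v)"
      by (simp only: geo_Suc distrib_right)
    also have "\<dots> = 1 - v ^ Suc K + (v ^ Suc K - v ^ Suc K * v)"
      using Suc by (simp only: right_diff_distrib mult_1_right)
    also have "\<dots> = 1 - v ^ Suc (Suc K)" by (simp add: power_Suc2[symmetric] del: power_Suc)
    finally show ?case using A by simp
  qed
  then show "(1 - v) * geo K v = 1 - v ^ Suc K" "geo K v * (1 - v) = 1 - v ^ Suc K" by auto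
qed

lemma inv_right: "low 1 (m - 1) \<Longrightarrow> eqv (Suc K) (m * geo K (1 - m)) 1"
proof -
  assume m: "low 1 (m - 1)"
  have v: "low 1 (1 - m)" using low_uminus[OF m] by simp
  have "m * geo K (1 - m) = (1 - (1 - m)) * geo K (1 - m)" by simp
  also have "\<dots> = 1 - (1 - m) ^ Suc K" by (rule geo_tele)
  finally show ?thesis using low_uminus[OF low_1_power[OF v, of "Suc K"]] by (simp add: eqv_def)
qed

lemma inv_left: "low 1 (m - 1) \<Longrightarrow> eqv (Suc K) (geo K (1 - m) * m) 1"
proof -
  assume m: "low 1 (m - 1)"
  have v: "low 1 (1 - m)" using low_uminus[OF m] by simp
  have "geo K (1 - m) * m = geo K (1 - m) * (1 - (1 - m))" by simp
  also have "\<dots> = 1 - (1 - m) ^ Suc K" by (rule geo_tele)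
  finally show ?thesis using low_uminus[OF low_1_power[OF v, of "Suc K"]] by (simp add: eqv_def)
qed

lemma inv_unique: "eqv n (x * y) 1 \<Longrightarrow> eqv n (z * x) 1 \<Longrightarrow> eqv n z (y::T)"
proof -
  assume xy: "eqv n (x * y) 1" and zx: "eqv n (z * x) 1"
  have "eqv n z (z * (x * y))" using eqv_mult[OF eqv_refl[of n z] eqv_sym[OF xy]] by simp
  also have "z * (x * y) = (z * x) * y" by (simp add: mult.assoc)
  also have "eqv n \<dots> y" using eqv_mult[OF zx eqv_refl[of n y]] by simp
  finally show ?thesis .
qed

lemma ev_zero: "ev K f (0::'a::graded ps) = C (fps_nth f 0)"
proof -
  have "ev K f (0::'a ps) = (\<Sum>i\<in>{0}. C (fps_nth f i) * 0 ^ i)"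
    unfolding ev_def by (rule sum.mono_neutral_right) (auto simp: power_0_left)
  then show ?thesis by simp
qed

lemma exp_neg: "low 1 a \<Longrightarrow> eqv (Suc K) (ev K fEXP a * ev K fEXP (- a)) (1::T)"
proof -
  assume a: "low 1 a"
  have "eqv (Suc K) (ev K fEXP a * ev K fEXP (- a)) (ev K fEXP (a + - a))"
    by (rule exp_add) (use a in \<open>auto intro: low_uminus\<close>)
  then show ?thesis by (simp add: ev_zero)
qed

lemma Gp_inv:
  assumes g: "g \<in> Gp d K"
  shows "invp K g \<in> Gp d K \<and> eqv (Suc K) (geo K (1 - g) * g) 1 \<and> eqv (Suc K) (g * geo K (1 - g)) 1"
proof -
  obtain a where a: "a \<in> Lset d K" and ga: "g = exq K a" using g by (auto simp: Gp_def)
  have a1: "low 1 a" using a by (rule Lset_low1)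
  have g1: "low 1 (g - 1)" using g by (rule Gp_low)
  have "eqv (Suc K) (geo K (1 - g)) (ev K fEXP (- a))"
  proof (rule inv_unique)
    have "eqv (Suc K) (g * ev K fEXP (- a)) (ev K fEXP a * ev K fEXP (- a))"
      unfolding ga exq_def by (intro eqv_mult tr_eqv eqv_refl)
    also have "eqv (Suc K) \<dots> 1" by (rule exp_neg[OF a1])
    finally show "eqv (Suc K) (g * ev K fEXP (- a)) 1" .
    show "eqv (Suc K) (geo K (1 - g) * g) 1" by (rule inv_left[OF g1])
  qed
  then have "invp K g = exq K (- a)" unfolding invp_def exq_def by (rule eqv_tr)
  moreover have "- a \<in> Lset d K" using a by (rule Lset_uminus)
  ultimately show ?thesis using inv_left[OF g1] inv_right[OF g1] by (auto simp: Gp_def)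
qed

lemma mulp_assoc: "mulp K (mulp K x y) z = mulp K x (mulp K y z)"
proof -
  have "tr K (tr K (x * y) * z) = tr K (x * y * z)" by (intro eqv_tr eqv_mult tr_eqv eqv_refl)
  moreover have "tr K (x * tr K (y * z)) = tr K (x * (y * z))" by (intro eqv_tr eqv_mult tr_eqv eqv_refl)
  ultimately show ?thesis by (simp add: mulp_def mult.assoc)
qed

lemma mulp_inv_left: "g \<in> Gp d K \<Longrightarrow> mulp K (invp K g) g = 1"
proof -
  assume g: "g \<in> Gp d K"
  have "tr K (tr K (geo K (1 - g)) * g) = tr K (geo K (1 - g) * g)"
    by (intro eqv_tr eqv_mult tr_eqv eqv_refl)
  also have "\<dots> = tr K 1" by (rule eqv_tr) (use Gp_inv[OF g] in auto)
  finally show ?thesis by (simp add: mulp_def invp_def)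
qed

lemma mulp_inv_right: "g \<in> Gp d K \<Longrightarrow> mulp K g (invp K g) = 1"
proof -
  assume g: "g \<in> Gp d K"
  have "tr K (g * tr K (geo K (1 - g))) = tr K (g * geo K (1 - g))"
    by (intro eqv_tr eqv_mult tr_eqv eqv_refl)
  also have "\<dots> = tr K 1" by (rule eqv_tr) (use Gp_inv[OF g] in auto)
  finally show ?thesis by (simp add: mulp_def invp_def)
qed

lemma mulp_1: "mulp K 1 x = tr K x"
  by (simp add: mulp_def)

lemma Gp_log: "g \<in> Gp d K \<Longrightarrow> lgp K g \<in> Lset d K \<and> exq K (lgp K g) = g"
  by (auto simp: Gp_def exq_Lset_log)

lemma one_Gp: "1 \<in> Gp d K"
proof -
  have "exq K 0 = 1" by (simp add: exq_def ev_zero)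
  then show ?thesis using Lset_0 unfolding Gp_def by force
qed


lemma pow_pert:
  fixes v u :: T
  assumes v: "low 1 v" and u: "low n u" and n: "1 \<le> n"
  shows "eqv (Suc n) ((v + u) ^ l) (v ^ l + (if l = 1 then u else 0))"
proof (induction l)
  case 0
  then show ?case by simp
next
  case (Suc l)
  let ?X = "if l = 1 then u else 0"
  have X: "low n ?X" using u by simp
  have "(v + u) ^ Suc l = (v + u) * (v + u) ^ l" by simp
  also have "eqv (Suc n) \<dots> ((v + u) * (v ^ l + ?X))"
    by (intro eqv_mult eqv_refl Suc)
  also have "eqv (Suc n) ((v + u) * (v ^ l + ?X)) (v ^ Suc l + (if Suc l = 1 then u else 0))"
  proof (cases l)
    case 0
    then show ?thesis by simp
  next
    case (Suc l')
    have eq: "(v + u) * (v ^ l + ?X) - v ^ Suc l = v * ?X + u * v ^ l + u * ?X"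
      by (simp add: algebra_simps)
    have l1: "low (Suc n) (v * ?X)" using low_mult[OF v X] by simp
    have l2: "low (Suc n) (u * v ^ l)"
      using low_mult[OF u low_1_power[OF v, of l]] Suc low_mono by fastforce
    have l3: "low (Suc n) (u * ?X)"
      using low_mult[OF u X] n low_mono by fastforce
    have "low (Suc n) ((v + u) * (v ^ l + ?X) - v ^ Suc l)"
      unfolding eq by (intro low_add l1 l2 l3)
    then show ?thesis using Suc by (simp add: eqv_def)
  qed
  finally show ?case .
qed

lemma fLN_1: "fps_nth fLN (Suc 0) = 1"
  by (simp add: fps_ln_nth)

lemma ev_LN_pert:
  fixes v u :: T
  assumes v: "low 1 v" and u: "low n u" and n: "1 \<le> n" and K: "1 \<le> K"
  shows "eqv (Suc n) (ev K fLN (v + u)) (ev K fLN v + u)"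
proof -
  have "eqv (Suc n) (ev K fLN (v + u)) (\<Sum>l\<le>K. C (fps_nth fLN l) * (v ^ l + (if l = 1 then u else 0)))"
    unfolding ev_def by (intro eqv_sum eqv_C_mult pow_pert v u n)
  also have "(\<Sum>l\<le>K. C (fps_nth fLN l) * (v ^ l + (if l = 1 then u else 0)))
      = ev K fLN v + (\<Sum>l\<le>K. C (fps_nth fLN l) * (if l = 1 then u else 0))"
    by (simp only: ev_def distrib_left sum.distrib)
  also have "(\<Sum>l\<le>K. C (fps_nth fLN l) * (if l = 1 then u else 0))
      = (\<Sum>l\<le>K. (if l = 1 then C (fps_nth fLN l) * u else 0))"
    by (rule sum.cong) auto
  also have "(\<Sum>l\<le>K. (if l = 1 then C (fps_nth fLN l) * u else 0)) = C (fps_nth fLN 1) * u"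
    using K by (simp add: sum.delta)
  finally show ?thesis by (simp add: fLN_1)
qed

lemma ev_EX_lin:
  fixes z :: T
  assumes z: "low n z" and n: "1 \<le> n" and K: "1 \<le> K"
  shows "eqv (Suc n) (ev K fEX z) z"
proof -
  have "ev K fEX z = C (fps_nth fEX 1) * z ^ 1 + (\<Sum>l\<in>{..K} - {1}. C (fps_nth fEX l) * z ^ l)"
    unfolding ev_def using K by (subst sum.remove[of _ 1]) auto
  moreover have "low (Suc n) (\<Sum>l\<in>{..K} - {1}. C (fps_nth fEX l) * z ^ l)"
  proof (rule low_sum)
    fix l assume l: "l \<in> {..K} - {1}"
    show "low (Suc n) (C (fps_nth fEX l) * z ^ l)"
    proof (cases "l = 0")
      case True
      then show ?thesis by simp
    next
      case False
      then have "2 \<le> l" using l by auto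
      then have "n * 2 \<le> n * l" by simp
      then have "Suc n \<le> n * l" using n by linarith
      then show ?thesis using low_power[OF z, of l] by (intro low_C_mult) (rule low_mono)
    qed
  qed
  ultimately show ?thesis by (simp add: eqv_def)
qed

lemma lgp_cong: "eqv (Suc K) a b \<Longrightarrow> lgp K a = lgp K b"
  unfolding lgp_def by (intro eqv_tr ev_cong eqv_diff eqv_refl)

lemma lgp_pert:
  fixes s u :: T
  assumes s: "low 1 (s - 1)" and u: "low n u" and n: "1 \<le> n" "n \<le> K"
  shows "eqv (Suc n) (lgp K ((1 + u) * s)) (lgp K s + u)"
proof -
  let ?v = "s - 1" and ?u' = "u + u * (s - 1)"
  have K: "1 \<le> K" using n by simp
  have uv: "low (Suc n) (u * (s - 1))" using low_mult[OF u s] by simp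
  have u': "low n ?u'" using u low_mono[OF uv, of n] by (intro low_add) auto
  have eq: "(1 + u) * s - 1 = ?v + ?u'" by (simp add: algebra_simps)
  have "lgp K ((1 + u) * s) = tr K (ev K fLN (?v + ?u'))" by (simp add: lgp_def eq)
  also have "eqv (Suc n) \<dots> (ev K fLN (?v + ?u'))" using tr_eqv eqv_mono n by blast
  also have "eqv (Suc n) \<dots> (ev K fLN ?v + ?u')" by (rule ev_LN_pert[OF s u' n(1) K])
  also have "eqv (Suc n) \<dots> (tr K (ev K fLN ?v) + u)"
  proof (rule eqv_add)
    show "eqv (Suc n) (ev K fLN ?v) (tr K (ev K fLN ?v))"
      using eqv_sym[OF tr_eqv] eqv_mono n by blast
    show "eqv (Suc n) ?u' u" using uv by (simp add: eqv_def)
  qed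
  finally show ?thesis by (simp add: lgp_def)
qed

definition Fp :: "nat \<Rightarrow> nat \<Rightarrow> (nat \<Rightarrow> T) \<Rightarrow> T \<Rightarrow> T" where
  "Fp K N xs m = (\<Sum>i<N. lgp K (mulp K (invp K m) (xs i)))"

lemma mulp_eqv: "eqv (Suc K) (mulp K x y) (x * y)"
  unfolding mulp_def by (rule tr_eqv)

lemma eq1_eqv: "tr K x = 1 \<Longrightarrow> eqv (Suc K) x 1"
  using tr_eq_eqv[of K x 1] by simp

lemma Fp_pert:
  assumes xs: "\<forall>i<N. xs i \<in> Gp d K" and m: "m \<in> Gp d K" and c: "c \<in> Lset d K"
    and cn: "low n c" and n: "1 \<le> n" "n \<le> K"
  shows "eqv (Suc n) (Fp K N xs (mulp K m (exq K c))) (Fp K N xs m - C (real N) * c)"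
proof -
  have K: "1 \<le> K" using n by simp
  have E: "exq K c \<in> Gp d K" using c by (auto simp: Gp_def)
  let ?m' = "mulp K m (exq K c)"
  have m': "?m' \<in> Gp d K" by (rule Gp_mult[OF m E])
  let ?u = "ev K fEX (- c)"
  have c1: "low 1 c" using c by (rule Lset_low1)
  have uc: "eqv (Suc n) ?u (- c)" by (rule ev_EX_lin[OF low_uminus[OF cn] n(1) K])
  have un: "low n ?u" using eqv_low_iff[OF eqv_mono[OF uc]] low_uminus[OF cn] by auto
  have E': "ev K fEXP (- c) = 1 + ?u" by (rule ev_EXP)
  have minv: "eqv (Suc K) (m * invp K m) 1"
    using mulp_inv_right[OF m] by (intro eq1_eqv) (simp add: mulp_def)
  have invstep: "eqv (Suc K) (invp K ?m') ((1 + ?u) * invp K m)"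
  proof (rule inv_unique)
    have "eqv (Suc K) (?m' * ((1 + ?u) * invp K m)) ((m * ev K fEXP c) * (ev K fEXP (- c) * invp K m))"
    proof (intro eqv_mult)
      show "eqv (Suc K) ?m' (m * ev K fEXP c)"
      proof -
        have "eqv (Suc K) ?m' (m * exq K c)" by (rule mulp_eqv)
        also have "eqv (Suc K) (m * exq K c) (m * ev K fEXP c)"
          unfolding exq_def by (intro eqv_mult eqv_refl tr_eqv)
        finally show ?thesis .
      qed
    qed (simp_all add: E')
    also have "(m * ev K fEXP c) * (ev K fEXP (- c) * invp K m) = m * (ev K fEXP c * ev K fEXP (- c)) * invp K m"
      by (simp add: mult.assoc)
    also have "eqv (Suc K) \<dots> (m * 1 * invp K m)"
      by (intro eqv_mult eqv_refl exp_neg c1)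
    also have "eqv (Suc K) (m * 1 * invp K m) 1" using minv by simp
    finally show "eqv (Suc K) (?m' * ((1 + ?u) * invp K m)) 1" .
    show "eqv (Suc K) (invp K ?m' * ?m') 1"
      using mulp_inv_left[OF m'] by (intro eq1_eqv) (simp add: mulp_def)
  qed
  have step: "eqv (Suc n) (lgp K (mulp K (invp K ?m') (xs i))) (lgp K (mulp K (invp K m) (xs i)) + ?u)"
    if i: "i < N" for i
  proof -
    let ?s = "mulp K (invp K m) (xs i)"
    have sG: "?s \<in> Gp d K" using xs i Gp_mult Gp_inv m by blast
    have "eqv (Suc K) (mulp K (invp K ?m') (xs i)) ((1 + ?u) * ?s)"
    proof -
      have "eqv (Suc K) (mulp K (invp K ?m') (xs i)) (invp K ?m' * xs i)" by (rule mulp_eqv)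
      also have "eqv (Suc K) \<dots> ((1 + ?u) * invp K m * xs i)"
        by (intro eqv_mult invstep eqv_refl)
      also have "(1 + ?u) * invp K m * xs i = (1 + ?u) * (invp K m * xs i)" by (simp add: mult.assoc)
      also have "eqv (Suc K) \<dots> ((1 + ?u) * ?s)"
        by (intro eqv_mult eqv_refl eqv_sym[OF mulp_eqv])
      finally show ?thesis .
    qed
    then have "lgp K (mulp K (invp K ?m') (xs i)) = lgp K ((1 + ?u) * ?s)" by (rule lgp_cong)
    also have "eqv (Suc n) \<dots> (lgp K ?s + ?u)"
      by (rule lgp_pert[OF Gp_low[OF sG] un n])
    finally show ?thesis .
  qed
  have "eqv (Suc n) (Fp K N xs ?m') (\<Sum>i<N. lgp K (mulp K (invp K m) (xs i)) + ?u)"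
    unfolding Fp_def by (intro eqv_sum step) auto
  also have "(\<Sum>i<N. lgp K (mulp K (invp K m) (xs i)) + ?u) = Fp K N xs m + of_nat N * ?u"
    by (simp add: Fp_def sum.distrib)
  also have "eqv (Suc n) \<dots> (Fp K N xs m + of_nat N * (- c))"
    by (intro eqv_add eqv_mult eqv_refl uc)
  also have "Fp K N xs m + of_nat N * (- c) = Fp K N xs m - C (real N) * c"
    by (simp add: C_of_nat)
  finally show ?thesis .
qed

lemma Fp_Lset: "\<forall>i<N. xs i \<in> Gp d K \<Longrightarrow> m \<in> Gp d K \<Longrightarrow> Fp K N xs m \<in> Lset d K"
  unfolding Fp_def
  by (intro Lset_sum) (use Gp_log Gp_mult Gp_inv in blast)

lemma Lset_tr: "a \<in> Lset d K \<Longrightarrow> tr K a = a"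
  by (simp add: Lset_def)

lemma min_deg:
  assumes tc: "tr K c = c" and c1: "low 1 c" and c0: "c \<noteq> 0"
  shows "\<exists>n. 1 \<le> n \<and> n \<le> K \<and> low n c \<and> \<not> low (Suc n) c"
proof -
  obtain w0 where w0: "lk c w0 \<noteq> 0" using c0 by (metis lookup_zero poly_mapping_eqI)
  have w0K: "length w0 \<le> K" using w0 tc by (metis lookup_tr)
  let ?P = "\<lambda>n. \<not> low (Suc n) c"
  have P0: "?P (length w0)" using w0 by (auto simp: low_def deg_list)
  define n where "n = (LEAST n. ?P n)"
  have Pn: "?P n" unfolding n_def by (rule LeastI[of ?P, OF P0])
  have nle: "n \<le> length w0" unfolding n_def by (rule Least_le[of ?P, OF P0])
  have lown: "low n c"
    unfolding low_def
  proof (intro allI impI)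
    fix x :: "nat list" assume x: "deg x < n"
    show "lk c x = 0"
    proof (rule ccontr)
      assume "lk c x \<noteq> 0"
      then have "?P (length x)" by (auto simp: low_def deg_list)
      then have "n \<le> length x" unfolding n_def by (rule Least_le)
      then show False using x by (simp add: deg_list)
    qed
  qed
  have "n \<noteq> 0"
  proof
    assume "n = 0" then show False using Pn c1 by simp
  qed
  then show ?thesis using Pn nle w0K lown by (intro exI[of _ n]) auto
qed

lemma Fp_unique:
  assumes N: "1 \<le> N" and xs: "\<forall>i<N. xs i \<in> Gp d K"
    and m: "m \<in> Gp d K" and m': "m' \<in> Gp d K"
    and F: "Fp K N xs m = 0" and F': "Fp K N xs m' = 0"
  shows "m = m'"
proof -
  let ?g = "mulp K (invp K m) m'"
  have g: "?g \<in> Gp d K" using Gp_mult Gp_inv m m' by blast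
  let ?c = "lgp K ?g"
  have cL: "?c \<in> Lset d K" and ec: "exq K ?c = ?g" using Gp_log[OF g] by auto
  have m'eq: "m' = mulp K m (exq K ?c)"
  proof -
    have "mulp K m (exq K ?c) = mulp K (mulp K m (invp K m)) m'" by (simp add: ec mulp_assoc)
    also have "\<dots> = m'" by (simp add: mulp_inv_right[OF m] mulp_1 Gp_tr[OF m'])
    finally show ?thesis by simp
  qed
  show ?thesis
  proof (rule ccontr)
    assume ne: "m \<noteq> m'"
    have "?c \<noteq> 0"
    proof
      assume "?c = 0"
      then have "m' = mulp K m 1" using m'eq by (simp add: exq_def ev_zero)
      also have "\<dots> = m" by (simp add: mulp_def Gp_tr[OF m])
      finally show False using ne by simp
    qed
    then obtain n where n: "1 \<le> n" "n \<le> K" and lown: "low n ?c" and nlow: "\<not> low (Suc n) ?c"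
      using min_deg[OF Lset_tr[OF cL] Lset_low1[OF cL]] by blast
    have "eqv (Suc n) (Fp K N xs m') (Fp K N xs m - C (real N) * ?c)"
      using Fp_pert[OF xs m cL lown n] m'eq by simp
    then have "low (Suc n) (C (real N) * ?c)" using F F' by (simp add: eqv_def)
    then have "low (Suc n) (C (1 / real N) * (C (real N) * ?c))" by (rule low_C_mult)
    then have "low (Suc n) ?c" using N by (simp add: C_mult_assoc_left)
    then show False using nlow by simp
  qed
qed

lemma Fp_exists:
  assumes N: "1 \<le> N" and xs: "\<forall>i<N. xs i \<in> Gp d K"
  shows "\<exists>m\<in>Gp d K. Fp K N xs m = 0"
proof -
  have "\<exists>m\<in>Gp d K. low (Suc j) (Fp K N xs m)" if "j \<le> K" for j
    using that
  proof (induction j)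
    case 0
    have "Fp K N xs 1 \<in> Lset d K" by (rule Fp_Lset[OF xs one_Gp])
    then have "low 1 (Fp K N xs 1)" by (rule Lset_low1)
    then show ?case using one_Gp[of d K] by auto
  next
    case (Suc j)
    then obtain m where m: "m \<in> Gp d K" and lm: "low (Suc j) (Fp K N xs m)" by auto
    let ?c = "C (1 / real N) * Fp K N xs m"
    have cL: "?c \<in> Lset d K" by (rule Lset_C_mult[OF Fp_Lset[OF xs m]])
    have lc: "low (Suc j) ?c" by (rule low_C_mult[OF lm])
    have "eqv (Suc (Suc j)) (Fp K N xs (mulp K m (exq K ?c))) (Fp K N xs m - C (real N) * ?c)"
      by (rule Fp_pert[OF xs m cL lc]) (use Suc in auto)
    moreover have "C (real N) * ?c = Fp K N xs m" using N by (simp add: C_mult_assoc_left)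
    ultimately have "low (Suc (Suc j)) (Fp K N xs (mulp K m (exq K ?c)))" by (simp add: eqv_def)
    moreover have "mulp K m (exq K ?c) \<in> Gp d K"
      using Gp_mult[OF m] cL by (auto simp: Gp_def)
    ultimately show ?case by blast
  qed
  from this[of K] obtain m where m: "m \<in> Gp d K" and lm: "low (Suc K) (Fp K N xs m)" by auto
  have "Fp K N xs m = tr K (Fp K N xs m)" using Lset_tr[OF Fp_Lset[OF xs m]] by simp
  also have "\<dots> = 0" by (rule tr_low_zero[OF lm])
  finally show ?thesis using m by blast
qed


lemma R_invp: "tinv K (R m) = R (invp K m)"
  by (simp add: R_inv invp_def)
lemma R_mulp: "tmul K (R x) (R y) = R (mulp K x y)"
  by (simp add: R_mul mulp_def)
lemma R_lgp: "tlog K (R s) = R (lgp K s)"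
  by (simp add: R_log lgp_def)

lemma Fdefs_eq:
  assumes x: "\<forall>i<N. x i = R (xs i)"
  shows "(\<lambda>w. \<Sum>i<N. tlog K (tmul K (tinv K (R mp)) (x i)) w) = R (Fp K N xs mp)"
proof
  fix w
  have "(\<Sum>i<N. tlog K (tmul K (tinv K (R mp)) (x i)) w) = (\<Sum>i<N. R (lgp K (mulp K (invp K mp) (xs i))) w)"
    by (rule sum.cong) (use x in \<open>simp_all add: R_invp R_mulp R_lgp\<close>)
  also have "\<dots> = R (Fp K N xs mp) w" by (simp add: Fp_def lookup_sum)
  finally show "(\<Sum>i<N. tlog K (tmul K (tinv K (R mp)) (x i)) w) = R (Fp K N xs mp) w" .
qed

lemma bary_char:
  assumes N: "1 \<le> N" and xs: "\<forall>i<N. xs i \<in> Gp d K" and x: "\<forall>i<N. x i = R (xs i)"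
    and mp: "mp \<in> Gp d K"
  shows "bary d K N x = R mp \<longleftrightarrow> Fp K N xs mp = 0"
proof -
  let ?Q = "\<lambda>m. m \<in> grp d K \<and> (\<lambda>w. \<Sum>i<N. tlog K (tmul K (tinv K m) (x i)) w) = (\<lambda>w. 0)"
  have Qiff: "?Q (R p) \<longleftrightarrow> Fp K N xs p = 0" if p: "p \<in> Gp d K" for p
  proof -
    have "R p \<in> grp d K" using p by (simp add: grp_eq)
    moreover have "(\<lambda>w. 0) = R 0" by (rule R_zero)
    ultimately show ?thesis using R_inj by (auto simp: Fdefs_eq[OF x])
  qed
  have QG: "?Q m \<Longrightarrow> \<exists>p\<in>Gp d K. m = R p" for m by (auto simp: grp_eq)
  obtain m0 where m0: "m0 \<in> Gp d K" "Fp K N xs m0 = 0" using Fp_exists[OF N xs] by blast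
  have ex1: "\<exists>!m. ?Q m"
  proof (rule ex1I[of _ "R m0"])
    show "?Q (R m0)" using Qiff[OF m0(1)] m0(2) by simp
    fix m assume "?Q m"
    then obtain p where p: "p \<in> Gp d K" "m = R p" using QG by blast
    then have "Fp K N xs p = 0" using Qiff \<open>?Q m\<close> by blast
    then have "p = m0" using Fp_unique[OF N xs p(1) m0(1)] m0(2) by simp
    then show "m = R m0" using p by simp
  qed
  have "bary d K N x = (THE m. ?Q m)" by (simp add: bary_def)
  then have Qb: "?Q (bary d K N x)" using theI'[OF ex1] by simp
  show ?thesis
  proof
    assume "bary d K N x = R mp"
    then show "Fp K N xs mp = 0" using Qb Qiff[OF mp] by simp
  next
    assume "Fp K N xs mp = 0"
    then have "?Q (R mp)" using Qiff[OF mp] by simp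
    then show "bary d K N x = R mp" using ex1 Qb by blast
  qed
qed

lemma lgp_1: "lgp K 1 = 0"
  by (simp add: lgp_def ev_zero)

lemma choose_reps:
  assumes "\<forall>i<M. x i \<in> grp d K"
  shows "\<exists>xs. \<forall>i<M. xs i \<in> Gp d K \<and> x i = R (xs i)"
proof -
  have "\<forall>i<M. \<exists>p. p \<in> Gp d K \<and> x i = R p" using assms by (auto simp: grp_eq)
  then show ?thesis by metis
qed

theorem proposition4p8:
  fixes d k N :: nat
  assumes "1 \<le> N"
  shows "(\<forall>y\<in>grp d k. \<exists>x. (\<forall>i<N. x i \<in> grp d k) \<and> bary d k N x = y)
    \<and> (\<forall>x \<sigma>. (\<forall>i<N. x i \<in> grp d k) \<and> \<sigma> permutes {..<N}
          \<longrightarrow> bary d k N (x \<circ> \<sigma>) = bary d k N x)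
    \<and> (\<forall>x. \<forall>y\<in>grp d k. (\<forall>i<N - 1. x i \<in> grp d k)
          \<longrightarrow> (\<exists>!z. z \<in> grp d k \<and> bary d k N (x(N - 1 := z)) = y))"
proof (intro conjI)
  show "\<forall>y\<in>grp d k. \<exists>x. (\<forall>i<N. x i \<in> grp d k) \<and> bary d k N x = y"
  proof
    fix y assume y: "y \<in> grp d k"
    then obtain yp where yp: "yp \<in> Gp d k" "y = R yp" by (auto simp: grp_eq)
    have "bary d k N (\<lambda>_. y) = R yp"
    proof (subst bary_char[OF assms, of "\<lambda>_. yp"])
      show "Fp k N (\<lambda>_. yp) yp = 0"
        by (simp add: Fp_def mulp_inv_left[OF yp(1)] lgp_1)
    qed (use yp in auto)
    then show "\<exists>x. (\<forall>i<N. x i \<in> grp d k) \<and> bary d k N x = y"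
      using y yp by (intro exI[of _ "\<lambda>_. y"]) auto
  qed
next
  show "\<forall>x \<sigma>. (\<forall>i<N. x i \<in> grp d k) \<and> \<sigma> permutes {..<N}
          \<longrightarrow> bary d k N (x \<circ> \<sigma>) = bary d k N x"
  proof (intro allI impI)
    fix x :: "nat \<Rightarrow> tensor" and \<sigma> :: "nat \<Rightarrow> nat"
    assume "(\<forall>i<N. x i \<in> grp d k) \<and> \<sigma> permutes {..<N}"
    then have p: "\<sigma> permutes {..<N}" by simp
    have "(\<lambda>w. \<Sum>i<N. tlog k (tmul k (tinv k m) ((x \<circ> \<sigma>) i)) w)
        = (\<lambda>w. \<Sum>i<N. tlog k (tmul k (tinv k m) (x i)) w)" for m
    proof
      fix w
      show "(\<Sum>i<N. tlog k (tmul k (tinv k m) ((x \<circ> \<sigma>) i)) w) = (\<Sum>i<N. tlog k (tmul k (tinv k m) (x i)) w)"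
        using sum.permute[OF p, of "\<lambda>i. tlog k (tmul k (tinv k m) (x i)) w"] by (simp add: comp_def)
    qed
    then show "bary d k N (x \<circ> \<sigma>) = bary d k N x" by (simp add: bary_def)
  qed
next
  show "\<forall>x. \<forall>y\<in>grp d k. (\<forall>i<N - 1. x i \<in> grp d k)
          \<longrightarrow> (\<exists>!z. z \<in> grp d k \<and> bary d k N (x(N - 1 := z)) = y)"
  proof (intro allI ballI impI)
    fix x :: "nat \<Rightarrow> tensor" and y
    assume y: "y \<in> grp d k" and x: "\<forall>i<N - 1. x i \<in> grp d k"
    obtain M where NM: "N = Suc M" using assms by (cases N) auto
    obtain yp where yp: "yp \<in> Gp d k" "y = R yp" using y by (auto simp: grp_eq)
    obtain xs where xs: "\<forall>i<M. xs i \<in> Gp d k \<and> x i = R (xs i)"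
      using choose_reps[of M x d k] x NM by auto
    let ?S = "\<Sum>i<M. lgp k (mulp k (invp k yp) (xs i))"
    have SL: "?S \<in> Lset d k"
      by (intro Lset_sum) (use xs yp Gp_log Gp_mult Gp_inv in blast)
    have key: "bary d k N (x(N - 1 := R zp)) = y \<longleftrightarrow> ?S + lgp k (mulp k (invp k yp) zp) = 0"
      if zp: "zp \<in> Gp d k" for zp
    proof -
      have xs': "\<forall>i<N. (xs(M := zp)) i \<in> Gp d k" using xs zp NM by auto
      have x': "\<forall>i<N. (x(N - 1 := R zp)) i = R ((xs(M := zp)) i)" using xs NM by auto
      have "bary d k N (x(N - 1 := R zp)) = y \<longleftrightarrow> Fp k N (xs(M := zp)) yp = 0"
        unfolding yp(2) by (rule bary_char[OF assms xs' x' yp(1)])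
      also have "Fp k N (xs(M := zp)) yp = ?S + lgp k (mulp k (invp k yp) zp)"
        unfolding Fp_def NM by (simp add: sum.lessThan_Suc)
      finally show ?thesis .
    qed
    let ?zp = "mulp k yp (exq k (- ?S))"
    have eG: "exq k (- ?S) \<in> Gp d k" using Lset_uminus[OF SL] by (auto simp: Gp_def)
    have zpG: "?zp \<in> Gp d k" by (rule Gp_mult[OF yp(1) eG])
    have "mulp k (invp k yp) ?zp = exq k (- ?S)"
      by (simp add: mulp_assoc[symmetric] mulp_inv_left[OF yp(1)] mulp_1 Gp_tr[OF eG])
    then have "lgp k (mulp k (invp k yp) ?zp) = - ?S"
      by (simp add: exq_Lset_log[OF Lset_uminus[OF SL]])
    then have zok: "bary d k N (x(N - 1 := R ?zp)) = y" using key[OF zpG] by simp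
    show "\<exists>!z. z \<in> grp d k \<and> bary d k N (x(N - 1 := z)) = y"
    proof (rule ex1I[of _ "R ?zp"])
      show "R ?zp \<in> grp d k \<and> bary d k N (x(N - 1 := R ?zp)) = y"
        using zpG zok by (auto simp: grp_eq)
      fix z assume z: "z \<in> grp d k \<and> bary d k N (x(N - 1 := z)) = y"
      then obtain zp where zp: "zp \<in> Gp d k" "z = R zp" by (auto simp: grp_eq)
      have h: "?S + lgp k (mulp k (invp k yp) zp) = 0" using key[OF zp(1)] z zp by simp
      have A: "lgp k (mulp k (invp k yp) zp) = - ?S"
        using h by (metis add.commute eq_neg_iff_add_eq_0)
      have l1: "lgp k (mulp k (invp k yp) zp) = lgp k (mulp k (invp k yp) ?zp)"
        using A \<open>lgp k (mulp k (invp k yp) ?zp) = - ?S\<close> by simp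
      have g1: "mulp k (invp k yp) zp \<in> Gp d k" using Gp_mult Gp_inv yp zp by blast
      have g2: "mulp k (invp k yp) ?zp \<in> Gp d k" using Gp_mult Gp_inv yp zpG by blast
      have "mulp k (invp k yp) zp = mulp k (invp k yp) ?zp"
        using Gp_log[OF g1] Gp_log[OF g2] l1 by metis
      then have "mulp k yp (mulp k (invp k yp) zp) = mulp k yp (mulp k (invp k yp) ?zp)" by simp
      then have "zp = ?zp"
        by (simp add: mulp_assoc[symmetric] mulp_inv_right[OF yp(1)] mulp_1 Gp_tr[OF zp(1)] Gp_tr[OF zpG] Gp_tr[OF yp(1)]
            del: mulp_assoc)
      then show "z = R ?zp" using zp by simp
    qed
  qed
qed


end
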